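(* Let $n\in\mathbb N$, let $p=p(n)$ satisfy $np\ge 10^4\log n$, and let $m=10\log(np)/p$. Let $W\subseteq[n]$ satisfy $|W|\ge 3n/8$. Then, with probability $1-o(n^{-2})$ (as $n\to\infty$), the random graph $G=G(n,p)$ contains a set $X\subseteq W$ with $|X|\le 8m$ such that every $U\subseteq V(G)\setminus X$ with $|U|\le m$ satisfies $|N(U,X)|\ge |U|$.
   Context: $G(n,p)$ is the binomial random graph on $[n]$. For $U\subseteq V(G)$, $N(U)=\big(\bigcup_{u\in U}N(u)\big)\setminus U$ and $N(U,X)=N(U)\cap X$. $\log$ is the natural logarithm. *)

theory Defs
  imports Complex_Main "HOL-Library.Landau_Symbols"
begin

text \<open>Graphs on the vertex set [n] = {1..n}, represented by their edge sets
  (sets of 2-element subsets of {1..n}).\<close>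

definition all_edges :: "nat \<Rightarrow> nat set set" where
  "all_edges n = {e. e \<subseteq> {1..n} \<and> card e = 2}"

definition gnp_prob :: "nat \<Rightarrow> real \<Rightarrow> (nat set set \<Rightarrow> bool) \<Rightarrow> real" where
  "gnp_prob n p P =
     (\<Sum>E\<in>{E. E \<subseteq> all_edges n \<and> P E}.
        p ^ card E * (1 - p) ^ (card (all_edges n) - card E))"

definition nbr :: "nat set set \<Rightarrow> nat \<Rightarrow> nat set" where
  "nbr E v = {u. {u, v} \<in> E}"

definition nbr_set :: "nat set set \<Rightarrow> nat set \<Rightarrow> nat set" where
  "nbr_set E U = (\<Union>u\<in>U. nbr E u) - U"

definition nbr_in :: "nat set set \<Rightarrow> nat set \<Rightarrow> nat set \<Rightarrow> nat set" where
  "nbr_in E U X = nbr_set E U \<inter> X"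

end

theory Submission
  imports Defs "HOL-Library.FuncSet" "HOL-Real_Asymp.Real_Asymp"
begin

definition wt :: "nat \<Rightarrow> real \<Rightarrow> nat set set \<Rightarrow> real" where
  "wt n p E = p ^ card E * (1 - p) ^ (card (all_edges n) - card E)"

lemma finite_AE: "finite (all_edges n)"
proof -
  have "all_edges n \<subseteq> Pow {1..n}" unfolding all_edges_def by auto
  thus ?thesis by (rule finite_subset) auto
qed

lemma wt_nonneg: "0 \<le> p \<Longrightarrow> p \<le> 1 \<Longrightarrow> 0 \<le> wt n p E"
  unfolding wt_def by simp

lemma gp_alt: "gnp_prob n p P = (\<Sum>E\<in>Pow (all_edges n). if P E then wt n p E else 0)"
proof -
  have eq: "{E. E \<subseteq> all_edges n \<and> P E} = {E \<in> Pow (all_edges n). P E}" by auto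
  have "gnp_prob n p P = (\<Sum>E\<in>{E \<in> Pow (all_edges n). P E}. wt n p E)"
    unfolding gnp_prob_def wt_def eq ..
  also have "\<dots> = (\<Sum>E\<in>Pow (all_edges n). if P E then wt n p E else 0)"
    by (rule sum.inter_filter) (simp add: finite_AE)
  finally show ?thesis .
qed

lemma gp_mono:
  assumes "0 \<le> p" "p \<le> 1" "\<And>E. E \<subseteq> all_edges n \<Longrightarrow> P E \<Longrightarrow> Q E"
  shows "gnp_prob n p P \<le> gnp_prob n p Q"
  unfolding gp_alt using assms wt_nonneg[OF assms(1,2)]
  by (intro sum_mono) auto

lemma gp_nonneg: "0 \<le> p \<Longrightarrow> p \<le> 1 \<Longrightarrow> 0 \<le> gnp_prob n p P"
  unfolding gp_alt using wt_nonneg by (intro sum_nonneg) auto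

lemma gp_union:
  assumes "0 \<le> p" "p \<le> 1" "finite I"
  shows "gnp_prob n p (\<lambda>E. \<exists>i\<in>I. P i E) \<le> (\<Sum>i\<in>I. gnp_prob n p (P i))"
proof -
  have "(\<Sum>i\<in>I. gnp_prob n p (P i)) =
        (\<Sum>E\<in>Pow (all_edges n). \<Sum>i\<in>I. if P i E then wt n p E else 0)"
    unfolding gp_alt by (rule sum.swap)
  moreover have "gnp_prob n p (\<lambda>E. \<exists>i\<in>I. P i E) \<le> \<dots>"
    unfolding gp_alt
  proof (intro sum_mono)
    fix E
    show "(if \<exists>i\<in>I. P i E then wt n p E else 0) \<le> (\<Sum>i\<in>I. if P i E then wt n p E else 0)"
    proof (cases "\<exists>i\<in>I. P i E")
      case True
      then obtain i where i: "i \<in> I" "P i E" by blast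
      have "(if P i E then wt n p E else 0) \<le> (\<Sum>i\<in>I. if P i E then wt n p E else 0)"
        by (rule member_le_sum) (use i assms wt_nonneg in auto)
      thus ?thesis using True i by simp
    next
      case False
      thus ?thesis using assms wt_nonneg by (auto intro: sum_nonneg)
    qed
  qed
  ultimately show ?thesis by simp
qed

lemma binom_subsets:
  fixes a b :: real
  assumes "finite C"
  shows "(\<Sum>F\<in>Pow C. a ^ card F * b ^ (card C - card F)) = (a + b) ^ card C"
  using assms
proof (induction C rule: finite_induct)
  case empty
  then show ?case by simp
next
  case (insert x C)
  have fin: "finite (Pow C)" using insert by simp
  have inj: "inj_on (insert x) (Pow C)" using insert(2)
  proof (intro inj_onI)
    fix F G assume "F \<in> Pow C" "G \<in> Pow C" "insert x F = insert x G"
    thus "F = G" using insert(2) by (metis Pow_iff insert_ident subsetD)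
  qed
  have disj: "Pow C \<inter> insert x ` Pow C = {}" using insert(2) by auto
  have S1: "(\<Sum>F\<in>Pow C. a ^ card F * b ^ (card (insert x C) - card F))
      = (\<Sum>F\<in>Pow C. b * (a ^ card F * b ^ (card C - card F)))"
  proof (intro sum.cong refl)
    fix F assume "F \<in> Pow C"
    hence "card F \<le> card C" using insert(1) by (simp add: card_mono)
    hence "card (insert x C) - card F = Suc (card C - card F)" using insert by simp
    thus "a ^ card F * b ^ (card (insert x C) - card F) = b * (a ^ card F * b ^ (card C - card F))"
      by simp
  qed
  have S2: "(\<Sum>F\<in>insert x ` Pow C. a ^ card F * b ^ (card (insert x C) - card F))
      = (\<Sum>F\<in>Pow C. a * (a ^ card F * b ^ (card C - card F)))"
    unfolding sum.reindex[OF inj] o_def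
  proof (intro sum.cong refl)
    fix F assume F: "F \<in> Pow C"
    hence "finite F" "x \<notin> F" using insert finite_subset by auto
    hence "card (insert x F) = Suc (card F)" by simp
    thus "a ^ card (insert x F) * b ^ (card (insert x C) - card (insert x F)) = a * (a ^ card F * b ^ (card C - card F))"
      using insert by simp
  qed
  have "(\<Sum>F\<in>Pow (insert x C). a ^ card F * b ^ (card (insert x C) - card F))
      = (\<Sum>F\<in>Pow C. a ^ card F * b ^ (card (insert x C) - card F))
        + (\<Sum>F\<in>insert x ` Pow C. a ^ card F * b ^ (card (insert x C) - card F))"
    unfolding Pow_insert using fin disj by (intro sum.union_disjoint) auto
  also have "\<dots> = b * (a + b) ^ card C + a * (a + b) ^ card C"
    unfolding S1 S2 by (simp only: sum_distrib_left[symmetric] insert.IH)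
  also have "\<dots> = (a + b) ^ card (insert x C)"
    using insert by (simp add: algebra_simps)
  finally show ?case .
qed

definition cyl :: "nat set set \<Rightarrow> nat set set \<Rightarrow> nat set set \<Rightarrow> bool" where
  "cyl A B E \<longleftrightarrow> A \<subseteq> E \<and> (\<forall>e\<in>B. e \<notin> E)"

lemma gp_cyl_eq:
  assumes "A \<subseteq> all_edges n" "B \<subseteq> all_edges n" "A \<inter> B = {}"
  shows "gnp_prob n p (cyl A B) = p ^ card A * (1 - p) ^ card B"
proof -
  let ?AE = "all_edges n"
  define C where "C = ?AE - A - B"
  have finC: "finite C" "finite A" "finite B" using finite_subset[OF _ finite_AE] assms unfolding C_def by auto
  have cardAE: "card ?AE = card A + card B + card C"
  proof -
    have "?AE = A \<union> B \<union> C" using assms unfolding C_def by auto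
    moreover have "card (A \<union> B \<union> C) = card A + card B + card C"
    proof -
      have "card (A \<union> B \<union> C) = card (A \<union> B) + card C"
        using finC by (intro card_Un_disjoint) (auto simp: C_def)
      moreover have "card (A \<union> B) = card A + card B"
        using finC assms(3) by (intro card_Un_disjoint) auto
      ultimately show ?thesis by simp
    qed
    ultimately show ?thesis by simp
  qed
  have eqset: "{E. E \<subseteq> ?AE \<and> cyl A B E} = (\<lambda>F. A \<union> F) ` Pow C"
  proof
    show "{E. E \<subseteq> ?AE \<and> cyl A B E} \<subseteq> (\<lambda>F. A \<union> F) ` Pow C"
    proof
      fix E assume "E \<in> {E. E \<subseteq> ?AE \<and> cyl A B E}"
      hence E: "E \<subseteq> ?AE" "A \<subseteq> E" "\<forall>e\<in>B. e \<notin> E" unfolding cyl_def by auto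
      hence "E = A \<union> (E - A)" "E - A \<in> Pow C" unfolding C_def by auto
      thus "E \<in> (\<lambda>F. A \<union> F) ` Pow C" by blast
    qed
    show "(\<lambda>F. A \<union> F) ` Pow C \<subseteq> {E. E \<subseteq> ?AE \<and> cyl A B E}"
      using assms unfolding C_def cyl_def by auto
  qed
  have inj: "inj_on (\<lambda>F. A \<union> F) (Pow C)"
    by (intro inj_onI) (auto simp: C_def)
  have "gnp_prob n p (cyl A B) = (\<Sum>F\<in>Pow C. p ^ card (A \<union> F) * (1 - p) ^ (card ?AE - card (A \<union> F)))"
    unfolding gnp_prob_def eqset sum.reindex[OF inj] o_def ..
  also have "\<dots> = (\<Sum>F\<in>Pow C. (p ^ card A * (1 - p) ^ card B) * (p ^ card F * (1 - p) ^ (card C - card F)))"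
  proof (intro sum.cong refl)
    fix F assume F: "F \<in> Pow C"
    hence fF: "finite F" and cF: "card F \<le> card C" using finC finite_subset card_mono by auto
    have "A \<inter> F = {}" using F unfolding C_def by auto
    hence cAF: "card (A \<union> F) = card A + card F" using fF finC by (simp add: card_Un_disjoint)
    have "card ?AE - card (A \<union> F) = card B + (card C - card F)" using cAF cardAE cF by simp
    thus "p ^ card (A \<union> F) * (1 - p) ^ (card ?AE - card (A \<union> F)) =
        (p ^ card A * (1 - p) ^ card B) * (p ^ card F * (1 - p) ^ (card C - card F))"
      using cAF by (simp add: power_add)
  qed
  also have "\<dots> = p ^ card A * (1 - p) ^ card B"
    unfolding sum_distrib_left[symmetric] binom_subsets[OF finC(1)] by simp
  finally show ?thesis .
qed

lemma gp_cyl_le: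
  assumes "A \<subseteq> all_edges n" "B \<subseteq> all_edges n" "0 \<le> p" "p \<le> 1"
  shows "gnp_prob n p (cyl A B) \<le> p ^ card A * (1 - p) ^ card B"
proof (cases "A \<inter> B = {}")
  case True
  then show ?thesis using gp_cyl_eq assms by simp
next
  case False
  hence "\<And>E. \<not> cyl A B E" unfolding cyl_def by auto
  hence "gnp_prob n p (cyl A B) = 0" unfolding gp_alt by simp
  thus ?thesis using assms by simp
qed

lemma gp_total: "gnp_prob n p (\<lambda>E. True) = 1"
proof -
  have "gnp_prob n p (cyl {} {}) = 1" using gp_cyl_eq[of "{}" n "{}" p] by simp
  moreover have "cyl {} {} = (\<lambda>E. True)" unfolding cyl_def by auto
  ultimately show ?thesis by simp
qed

lemma gp_compl: "1 - gnp_prob n p P = gnp_prob n p (\<lambda>E. \<not> P E)"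
proof -
  have "gnp_prob n p P + gnp_prob n p (\<lambda>E. \<not> P E) = gnp_prob n p (\<lambda>E. True)"
    unfolding gp_alt sum.distrib[symmetric] by (intro sum.cong) auto
  thus ?thesis using gp_total by simp
qed

lemma gp_exists_cyl:
  assumes "0 \<le> p" "p \<le> 1" "finite I" "\<And>i. i \<in> I \<Longrightarrow> A i \<subseteq> all_edges n"
    "\<And>i. i \<in> I \<Longrightarrow> B i \<subseteq> all_edges n"
  shows "gnp_prob n p (\<lambda>E. \<exists>i\<in>I. cyl (A i) (B i) E) \<le> (\<Sum>i\<in>I. p ^ card (A i) * (1 - p) ^ card (B i))"
  using gp_union[OF assms(1-3), where P="\<lambda>i. cyl (A i) (B i)"] gp_cyl_le[OF assms(4,5) assms(1,2)]
  by (smt (verit, ccfv_SIG) sum_mono)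

definition pr :: "nat set \<Rightarrow> (nat \<Rightarrow> nat set) \<Rightarrow> nat set set" where
  "pr V T = (\<lambda>(v,t). {v,t}) ` (SIGMA v:V. T v)"

lemma pr_card:
  assumes "finite V" "\<And>v. v \<in> V \<Longrightarrow> finite (T v)" "\<And>v t. v \<in> V \<Longrightarrow> t \<in> T v \<Longrightarrow> t \<notin> V"
  shows "card (pr V T) = (\<Sum>v\<in>V. card (T v))"
proof -
  have "inj_on (\<lambda>(v,t). {v,t}) (SIGMA v:V. T v)"
  proof (intro inj_onI)
    fix x y assume x: "x \<in> (SIGMA v:V. T v)" and y: "y \<in> (SIGMA v:V. T v)"
      and eq: "(\<lambda>(v,t). {v,t}) x = (\<lambda>(v,t). {v,t}) y"
    obtain v t where xv: "x = (v,t)" "v \<in> V" "t \<in> T v" using x by auto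
    obtain v' t' where yv: "y = (v',t')" "v' \<in> V" "t' \<in> T v'" using y by auto
    have "{v,t} = {v',t'}" using eq xv yv by simp
    moreover have "t \<notin> V" "t' \<notin> V" using assms(3) xv yv by auto
    ultimately have "v = v' \<and> t = t'" using xv(2) yv(2) by (auto simp: doubleton_eq_iff)
    thus "x = y" using xv yv by simp
  qed
  hence "card (pr V T) = card (SIGMA v:V. T v)" unfolding pr_def by (rule card_image)
  also have "\<dots> = (\<Sum>v\<in>V. card (T v))" using assms by (intro card_SigmaI) auto
  finally show ?thesis .
qed

lemma pr_AE:
  assumes "V \<subseteq> {1..n}" "\<And>v. v \<in> V \<Longrightarrow> T v \<subseteq> {1..n}" "\<And>v t. v \<in> V \<Longrightarrow> t \<in> T v \<Longrightarrow> t \<notin> V"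
  shows "pr V T \<subseteq> all_edges n"
proof
  fix e assume "e \<in> pr V T"
  then obtain v t where e: "e = {v,t}" "v \<in> V" "t \<in> T v" unfolding pr_def by auto
  hence "v \<noteq> t" using assms(3) by auto
  moreover have "t \<in> {1..n}" "v \<in> {1..n}" using assms(2)[OF e(2)] e(3) e(2) assms(1) by blast+
  ultimately show "e \<in> all_edges n" using e unfolding all_edges_def by auto
qed

lemma pr_sub_iff: "pr V T \<subseteq> E \<longleftrightarrow> (\<forall>v\<in>V. \<forall>t\<in>T v. {v,t} \<in> E)"
  unfolding pr_def by auto

lemma pr_disj_iff: "(\<forall>e\<in>pr V T. e \<notin> E) \<longleftrightarrow> (\<forall>v\<in>V. \<forall>t\<in>T v. {v,t} \<notin> E)"
  unfolding pr_def by auto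

lemma nbr_sub: "E \<subseteq> all_edges n \<Longrightarrow> nbr E v \<subseteq> {1..n}"
  unfolding nbr_def all_edges_def by auto

lemma nbr_not_self: "E \<subseteq> all_edges n \<Longrightarrow> v \<notin> nbr E v"
  unfolding nbr_def all_edges_def by auto

lemma nbr_iff: "t \<in> nbr E v \<longleftrightarrow> {v,t} \<in> E"
  unfolding nbr_def by (simp add: insert_commute)

lemma det:
  fixes n k \<beta> M :: nat and m :: real and E :: "nat set set" and X1 W :: "nat set"
  assumes E: "E \<subseteq> all_edges n" and W: "W \<subseteq> {1..n}" and X1: "X1 \<subseteq> W"
  and deg: "\<And>v. v \<in> {1..n} \<Longrightarrow> card (nbr E v) \<le> k"
  and cB: "card {v \<in> {1..n} - X1. card (nbr E v \<inter> X1) \<le> 2} \<le> \<beta>"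
  and H2: "\<And>U. U \<subseteq> {1..n} - X1 \<Longrightarrow> (\<forall>v\<in>U. 3 \<le> card (nbr E v \<inter> X1)) \<Longrightarrow> 4 \<le> card U
            \<Longrightarrow> card U \<le> M \<Longrightarrow> card U \<le> card ((\<Union>v\<in>U. nbr E v) \<inter> X1)"
  and H3: "\<And>U. U \<subseteq> {1..n} \<Longrightarrow> 1 \<le> card U \<Longrightarrow> card U \<le> M
            \<Longrightarrow> card U \<le> card ((\<Union>v\<in>U. nbr E v) \<inter> (W - X1))"
  and num: "real (card X1) + real \<beta> * real k \<le> 8 * m" and M: "M = nat \<lfloor>m\<rfloor>"
  shows "\<exists>X. X \<subseteq> W \<and> real (card X) \<le> 8 * m \<and>
           (\<forall>U. U \<subseteq> {1..n} - X \<and> real (card U) \<le> m \<longrightarrow> card (nbr_in E U X) \<ge> card U)"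
proof -
  define B where "B = {v \<in> {1..n} - X1. card (nbr E v \<inter> X1) \<le> 2}"
  define Y where "Y = (\<Union>v\<in>B. nbr E v) \<inter> (W - X1)"
  define X where "X = X1 \<union> Y"
  have finW: "finite W" using W finite_subset by blast
  have finX1: "finite X1" using X1 finW finite_subset by blast
  have finB: "finite B" unfolding B_def by auto
  have finnbr: "\<And>v. finite (nbr E v)" using nbr_sub[OF E] finite_subset by blast
  have XW: "X \<subseteq> W" unfolding X_def Y_def using X1 by auto
  have finY: "finite Y" using XW finW finite_subset unfolding X_def by blast
  have "card Y \<le> card (\<Union>v\<in>B. nbr E v)"
    unfolding Y_def using finB finnbr by (intro card_mono) auto
  also have "\<dots> \<le> (\<Sum>v\<in>B. card (nbr E v))" by (rule card_UN_le[OF finB])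
  also have "\<dots> \<le> (\<Sum>v\<in>B. k)" using deg unfolding B_def by (intro sum_mono) auto
  also have "\<dots> = card B * k" by simp
  also have "\<dots> \<le> \<beta> * k" using cB unfolding B_def by simp
  finally have cY: "card Y \<le> \<beta> * k" .
  have "card X \<le> card X1 + card Y" unfolding X_def by (rule card_Un_le)
  hence "real (card X) \<le> real (card X1) + real \<beta> * real k" using cY
    by (metis of_nat_add of_nat_le_iff of_nat_mult add_le_mono order.refl order_trans)
  hence cX: "real (card X) \<le> 8 * m" using num by linarith
  have hall: "card (nbr_in E U X) \<ge> card U" if U: "U \<subseteq> {1..n} - X" "real (card U) \<le> m" for U
  proof -
    have finU: "finite U" using U(1) finite_subset by blast
    have "int (card U) \<le> \<lfloor>m\<rfloor>" using U(2) by (simp add: le_floor_iff)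
    hence cUM: "card U \<le> M" unfolding M by linarith
    define UB where "UB = U \<inter> B"
    define UG where "UG = U - B"
    define N1 where "N1 = (\<Union>v\<in>UB. nbr E v) \<inter> (W - X1)"
    define N2 where "N2 = (\<Union>v\<in>UG. nbr E v) \<inter> X1"
    have UX: "U \<inter> X = {}" using U by auto
    have sub: "N1 \<union> N2 \<subseteq> nbr_in E U X"
    proof
      fix x assume x: "x \<in> N1 \<union> N2"
      then obtain v where v: "v \<in> U" "x \<in> nbr E v" unfolding N1_def N2_def UB_def UG_def by auto
      have "x \<in> X" using x unfolding N1_def N2_def X_def Y_def UB_def by auto
      hence "x \<notin> U" using UX by auto
      thus "x \<in> nbr_in E U X" using v \<open>x \<in> X\<close> unfolding nbr_in_def nbr_set_def by auto
    qed
    have finN: "finite (nbr_in E U X)" unfolding nbr_in_def using XW finW finite_subset by blast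
    have disj: "N1 \<inter> N2 = {}" unfolding N1_def N2_def by auto
    have finN1: "finite N1" "finite N2" unfolding N1_def N2_def using finW finX1 by auto
    have c1: "card UB \<le> card N1"
    proof (cases "UB = {}")
      case True thus ?thesis by simp
    next
      case False
      hence "1 \<le> card UB" using finU unfolding UB_def by (simp add: Suc_le_eq card_gt_0_iff)
      moreover have "card UB \<le> M" using cUM card_mono[OF finU, of UB] unfolding UB_def by auto
      moreover have "UB \<subseteq> {1..n}" using U unfolding UB_def by auto
      ultimately show ?thesis using H3 unfolding N1_def by blast
    qed
    have goodG: "\<forall>v\<in>UG. 3 \<le> card (nbr E v \<inter> X1)"
      using U unfolding UG_def B_def X_def by auto
    have c2: "card UG \<le> card N2"
    proof (cases "4 \<le> card UG")
      case True
      moreover have "card UG \<le> M" using cUM card_mono[OF finU, of UG] unfolding UG_def by auto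
      moreover have "UG \<subseteq> {1..n} - X1" using U unfolding UG_def X_def by auto
      ultimately show ?thesis using H2 goodG unfolding N2_def by blast
    next
      case False
      show ?thesis
      proof (cases "UG = {}")
        case True thus ?thesis by simp
      next
        case ne: False
        then obtain v where v: "v \<in> UG" by blast
        have "nbr E v \<inter> X1 \<subseteq> N2" using v unfolding N2_def by auto
        hence "card (nbr E v \<inter> X1) \<le> card N2" using finN1 by (intro card_mono) auto
        thus ?thesis using goodG v False by fastforce
      qed
    qed
    have "card U = card UB + card UG"
      unfolding UB_def UG_def using finU card_Un_disjoint[of "U \<inter> B" "U - B"]
      by (metis Int_Diff_Un Int_Diff_disjoint finite_Diff finite_Int)
    also have "\<dots> \<le> card N1 + card N2" using c1 c2 by simp
    also have "\<dots> = card (N1 \<union> N2)" using disj finN1 by (simp add: card_Un_disjoint)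
    also have "\<dots> \<le> card (nbr_in E U X)" using sub finN by (rule card_mono[rotated])
    finally show ?thesis .
  qed
  show ?thesis using XW cX hall by blast
qed

lemma extend_subset:
  assumes "finite A" "N \<subseteq> A" "card N \<le> j" "j \<le> card A"
  obtains S where "N \<subseteq> S" "S \<subseteq> A" "card S = j"
proof -
  have finN: "finite N" using assms finite_subset by blast
  have "card (A - N) = card A - card N" using assms finN by (simp add: card_Diff_subset)
  hence "j - card N \<le> card (A - N)" using assms by simp
  then obtain R where R: "R \<subseteq> A - N" "card R = j - card N" "finite R"
    by (rule obtain_subset_with_card_n)
  have "card (N \<union> R) = card N + card R" using R finN by (intro card_Un_disjoint) auto
  hence "card (N \<union> R) = j" using R assms by simp
  thus ?thesis using that[of "N \<union> R"] R assms by auto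
qed

lemma sum_const_real: "(\<Sum>x\<in>A. (c::real)) = real (card A) * c" by simp

section \<open>Degree event\<close>

definition Fdeg :: "nat \<Rightarrow> nat \<Rightarrow> nat set set \<Rightarrow> bool" where
  "Fdeg n k E \<longleftrightarrow> (\<exists>v\<in>{1..n}. \<exists>T\<in>{T. T \<subseteq> {1..n} - {v} \<and> card T = k}. cyl (pr {v} (\<lambda>_. T)) {} E)"

lemma Fdeg_det:
  assumes E: "E \<subseteq> all_edges n" and nF: "\<not> Fdeg n k E" and v: "v \<in> {1..n}"
  shows "card (nbr E v) \<le> k"
proof (rule ccontr)
  assume "\<not> card (nbr E v) \<le> k"
  hence "k \<le> card (nbr E v)" by simp
  then obtain T where T: "T \<subseteq> nbr E v" "card T = k" by (rule obtain_subset_with_card_n)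
  have "T \<subseteq> {1..n} - {v}" using T nbr_sub[OF E] nbr_not_self[OF E] by blast
  moreover have "cyl (pr {v} (\<lambda>_. T)) {} E"
    unfolding cyl_def pr_sub_iff using T nbr_iff by blast
  ultimately have "Fdeg n k E" unfolding Fdeg_def using v T by blast
  thus False using nF by simp
qed

lemma Fdeg_bound:
  assumes p: "0 \<le> p" "p \<le> 1"
  shows "gnp_prob n p (Fdeg n k) \<le> real n * real (n choose k) * p ^ k"
proof -
  have "gnp_prob n p (Fdeg n k) \<le> (\<Sum>v\<in>{1..n}. gnp_prob n p (\<lambda>E. \<exists>T\<in>{T. T \<subseteq> {1..n} - {v} \<and> card T = k}. cyl (pr {v} (\<lambda>_. T)) {} E))"
    unfolding Fdeg_def by (rule gp_union[OF p]) simp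
  also have "\<dots> \<le> (\<Sum>v\<in>{1..n}. \<Sum>T\<in>{T. T \<subseteq> {1..n} - {v} \<and> card T = k}. p ^ card (pr {v} (\<lambda>_. T)) * (1 - p) ^ card ({}::nat set set))"
  proof (intro sum_mono gp_exists_cyl[OF p])
    fix v T assume v: "v \<in> {1..n}" and T: "T \<in> {T. T \<subseteq> {1..n} - {v} \<and> card T = k}"
    show "pr {v} (\<lambda>_. T) \<subseteq> all_edges n" using v T by (intro pr_AE) auto
  qed auto
  also have "\<dots> = (\<Sum>v\<in>{1..n}. \<Sum>T\<in>{T. T \<subseteq> {1..n} - {v} \<and> card T = k}. p ^ k)"
  proof (intro sum.cong refl)
    fix v T assume v: "v \<in> {1..n}" and T: "T \<in> {T. T \<subseteq> {1..n} - {v} \<and> card T = k}"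
    have "card (pr {v} (\<lambda>_. T)) = card T" using T finite_subset[of T "{1..n}"]
      by (subst pr_card) auto
    thus "p ^ card (pr {v} (\<lambda>_. T)) * (1 - p) ^ card ({}::nat set set) = p ^ k" using T by simp
  qed
  also have "\<dots> = (\<Sum>v\<in>{1..n}. real ((n - 1) choose k) * p ^ k)"
  proof (intro sum.cong refl)
    fix v assume v: "v \<in> {1..n}"
    have "card ({1..n} - {v}) = n - 1" using v by simp
    thus "(\<Sum>T\<in>{T. T \<subseteq> {1..n} - {v} \<and> card T = k}. p ^ k) = real ((n - 1) choose k) * p ^ k"
      by (simp add: n_subsets)
  qed
  also have "\<dots> \<le> (\<Sum>v\<in>{1..n}. real (n choose k) * p ^ k)"
    using p by (intro sum_mono mult_right_mono) (auto intro: binomial_right_mono)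
  also have "\<dots> = real n * real (n choose k) * p ^ k" by simp
  finally show ?thesis .
qed

section \<open>Bad vertices event\<close>

definition FB :: "nat \<Rightarrow> nat set \<Rightarrow> nat \<Rightarrow> nat set set \<Rightarrow> bool" where
  "FB n X1 b E \<longleftrightarrow> (\<exists>B0\<in>{B0. B0 \<subseteq> {1..n} - X1 \<and> card B0 = b}.
      \<exists>T\<in>PiE B0 (\<lambda>_. {T. T \<subseteq> X1 \<and> card T \<le> 2}). cyl (pr B0 T) (pr B0 (\<lambda>v. X1 - T v)) E)"

lemma FB_det:
  assumes E: "E \<subseteq> all_edges n" and nF: "\<not> FB n X1 b E"
  shows "card {v \<in> {1..n} - X1. card (nbr E v \<inter> X1) \<le> 2} < b"
proof (rule ccontr)
  define B where "B = {v \<in> {1..n} - X1. card (nbr E v \<inter> X1) \<le> 2}"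
  assume "\<not> card {v \<in> {1..n} - X1. card (nbr E v \<inter> X1) \<le> 2} < b"
  hence "b \<le> card B" unfolding B_def by simp
  then obtain B0 where B0: "B0 \<subseteq> B" "card B0 = b" by (rule obtain_subset_with_card_n)
  define T where "T = restrict (\<lambda>v. nbr E v \<inter> X1) B0"
  have "T \<in> PiE B0 (\<lambda>_. {T. T \<subseteq> X1 \<and> card T \<le> 2})"
    using B0 unfolding T_def B_def by auto
  moreover have "cyl (pr B0 T) (pr B0 (\<lambda>v. X1 - T v)) E"
    unfolding cyl_def pr_sub_iff pr_disj_iff T_def using nbr_iff by auto
  moreover have "B0 \<in> {B0. B0 \<subseteq> {1..n} - X1 \<and> card B0 = b}" using B0 unfolding B_def by auto
  ultimately have "FB n X1 b E" unfolding FB_def by blast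
  thus False using nF by simp
qed

lemma FB_bound:
  assumes p: "0 \<le> p" "p \<le> 1" and X1: "X1 \<subseteq> {1..n}"
  defines "q \<equiv> (\<Sum>T\<in>{T. T \<subseteq> X1 \<and> card T \<le> 2}. p ^ card T * (1 - p) ^ (card X1 - card T))"
  shows "gnp_prob n p (FB n X1 b) \<le> real (n choose b) * q ^ b"
proof -
  let ?BS = "{B0. B0 \<subseteq> {1..n} - X1 \<and> card B0 = b}"
  let ?TS = "{T. T \<subseteq> X1 \<and> card T \<le> 2}"
  have finX1: "finite X1" using X1 finite_subset by blast
  have finTS: "finite ?TS" using finX1 by simp
  have "gnp_prob n p (FB n X1 b) \<le> (\<Sum>B0\<in>?BS. gnp_prob n p (\<lambda>E. \<exists>T\<in>PiE B0 (\<lambda>_. ?TS). cyl (pr B0 T) (pr B0 (\<lambda>v. X1 - T v)) E))"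
    unfolding FB_def by (rule gp_union[OF p]) simp
  also have "\<dots> \<le> (\<Sum>B0\<in>?BS. \<Sum>T\<in>PiE B0 (\<lambda>_. ?TS). p ^ card (pr B0 T) * (1 - p) ^ card (pr B0 (\<lambda>v. X1 - T v)))"
  proof (intro sum_mono gp_exists_cyl[OF p])
    fix B0 T assume B0: "B0 \<in> ?BS" and T: "T \<in> PiE B0 (\<lambda>_. ?TS)"
    show "pr B0 T \<subseteq> all_edges n" using B0 T X1 by (intro pr_AE) auto
    show "pr B0 (\<lambda>v. X1 - T v) \<subseteq> all_edges n" using B0 T X1 by (intro pr_AE) auto
  next
    fix B0 assume B0: "B0 \<in> ?BS"
    show "finite (PiE B0 (\<lambda>_. ?TS))" using B0 finTS by (intro finite_PiE) (auto intro: finite_subset)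
  qed
  also have "\<dots> = (\<Sum>B0\<in>?BS. \<Sum>T\<in>PiE B0 (\<lambda>_. ?TS). \<Prod>v\<in>B0. p ^ card (T v) * (1 - p) ^ (card X1 - card (T v)))"
  proof (intro sum.cong refl)
    fix B0 T assume B0: "B0 \<in> ?BS" and T: "T \<in> PiE B0 (\<lambda>_. ?TS)"
    have finB0: "finite B0" using B0 finite_subset by auto
    have c1: "card (pr B0 T) = (\<Sum>v\<in>B0. card (T v))"
      using B0 T finX1 by (intro pr_card finB0) (auto intro: finite_subset)
    have c2: "card (pr B0 (\<lambda>v. X1 - T v)) = (\<Sum>v\<in>B0. card X1 - card (T v))"
    proof -
      have "card (pr B0 (\<lambda>v. X1 - T v)) = (\<Sum>v\<in>B0. card (X1 - T v))"
        using B0 T finX1 by (intro pr_card finB0) auto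
      also have "\<dots> = (\<Sum>v\<in>B0. card X1 - card (T v))"
        using T finX1 by (intro sum.cong refl card_Diff_subset) (auto intro: finite_subset)
      finally show ?thesis .
    qed
    show "p ^ card (pr B0 T) * (1 - p) ^ card (pr B0 (\<lambda>v. X1 - T v)) =
        (\<Prod>v\<in>B0. p ^ card (T v) * (1 - p) ^ (card X1 - card (T v)))"
      unfolding c1 c2 power_sum prod.distrib ..
  qed
  also have "\<dots> = (\<Sum>B0\<in>?BS. \<Prod>v\<in>B0. q)"
  proof (intro sum.cong refl)
    fix B0 assume B0: "B0 \<in> ?BS"
    have finB0: "finite B0" using B0 finite_subset by auto
    show "(\<Sum>T\<in>PiE B0 (\<lambda>_. ?TS). \<Prod>v\<in>B0. p ^ card (T v) * (1 - p) ^ (card X1 - card (T v))) = (\<Prod>v\<in>B0. q)"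
      unfolding q_def by (rule prod_sum_PiE[symmetric]) (use finB0 finTS in auto)
  qed
  also have "\<dots> = real (card ?BS) * q ^ b" by simp
  also have "card ?BS = (n - card X1) choose b"
    using X1 finX1 by (subst n_subsets) (auto simp: card_Diff_subset)
  also have "real ((n - card X1) choose b) * q ^ b \<le> real (n choose b) * q ^ b"
  proof (intro mult_right_mono)
    show "0 \<le> q ^ b" unfolding q_def using p by (intro zero_le_power sum_nonneg) auto
  qed (auto intro: binomial_right_mono)
  finally show ?thesis .
qed

section \<open>Expansion of good sets into X1\<close>

definition FQ2 :: "nat \<Rightarrow> nat set \<Rightarrow> nat \<Rightarrow> nat set set \<Rightarrow> bool" where
  "FQ2 n X1 M E \<longleftrightarrow> (\<exists>u\<in>{4..M}. \<exists>U\<in>{U. U \<subseteq> {1..n} - X1 \<and> card U = u}.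
      \<exists>S\<in>{S. S \<subseteq> X1 \<and> card S = u - 1}. \<exists>T\<in>PiE U (\<lambda>_. {T. T \<subseteq> S \<and> card T = 3}).
      cyl (pr U T) (pr U (\<lambda>_. X1 - S)) E)"

lemma FQ2_det:
  assumes E: "E \<subseteq> all_edges n" and nF: "\<not> FQ2 n X1 M E" and X1: "X1 \<subseteq> {1..n}" and sM: "M \<le> card X1"
    and U: "U \<subseteq> {1..n} - X1" "\<forall>v\<in>U. 3 \<le> card (nbr E v \<inter> X1)" "4 \<le> card U" "card U \<le> M"
  shows "card U \<le> card ((\<Union>v\<in>U. nbr E v) \<inter> X1)"
proof (rule ccontr)
  define N where "N = (\<Union>v\<in>U. nbr E v) \<inter> X1"
  define u where "u = card U"
  assume "\<not> card U \<le> card ((\<Union>v\<in>U. nbr E v) \<inter> X1)"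
  hence cN: "card N \<le> u - 1" unfolding N_def u_def by simp
  have finX1: "finite X1" using X1 finite_subset by blast
  obtain S where S: "N \<subseteq> S" "S \<subseteq> X1" "card S = u - 1"
    by (rule extend_subset[OF finX1 _ cN]) (use sM U in \<open>auto simp: N_def u_def\<close>)
  define T where "T = restrict (\<lambda>v. SOME T. T \<subseteq> nbr E v \<inter> X1 \<and> card T = 3) U"
  have Tv: "T v \<subseteq> nbr E v \<inter> X1 \<and> card (T v) = 3" if v: "v \<in> U" for v
  proof -
    have "\<exists>T. T \<subseteq> nbr E v \<inter> X1 \<and> card T = 3"
      using U(2) v by (meson obtain_subset_with_card_n)
    hence "(SOME T. T \<subseteq> nbr E v \<inter> X1 \<and> card T = 3) \<subseteq> nbr E v \<inter> X1 \<and>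
           card (SOME T. T \<subseteq> nbr E v \<inter> X1 \<and> card T = 3) = 3" by (rule someI_ex)
    thus ?thesis using v unfolding T_def by simp
  qed
  have "T \<in> PiE U (\<lambda>_. {T. T \<subseteq> S \<and> card T = 3})"
  proof -
    have "T v \<subseteq> S" if "v \<in> U" for v using Tv[OF that] S(1) that unfolding N_def by blast
    thus ?thesis using Tv unfolding T_def by auto
  qed
  moreover have "cyl (pr U T) (pr U (\<lambda>_. X1 - S)) E"
    unfolding cyl_def pr_sub_iff pr_disj_iff
  proof (intro conjI ballI)
    fix v t assume "v \<in> U" "t \<in> T v"
    thus "{v,t} \<in> E" using Tv nbr_iff by blast
  next
    fix v t assume v: "v \<in> U" and t: "t \<in> X1 - S"
    show "{v,t} \<notin> E"
    proof
      assume "{v,t} \<in> E"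
      hence "t \<in> N" using v t nbr_iff unfolding N_def by blast
      thus False using S t by blast
    qed
  qed
  moreover have "u \<in> {4..M}" "U \<in> {U. U \<subseteq> {1..n} - X1 \<and> card U = u}" "S \<in> {S. S \<subseteq> X1 \<and> card S = u - 1}"
    using U S unfolding u_def by auto
  ultimately have "FQ2 n X1 M E" unfolding FQ2_def by blast
  thus False using nF by simp
qed

lemma FQ2_bound:
  assumes p: "0 \<le> p" "p \<le> 1" and X1: "X1 \<subseteq> {1..n}"
  shows "gnp_prob n p (FQ2 n X1 M) \<le> (\<Sum>u\<in>{4..M}. real (n choose u) * real (card X1 choose (u - 1))
            * real ((u - 1) choose 3) ^ u * p ^ (3 * u) * (1 - p) ^ (u * (card X1 - (u - 1))))"
proof -
  let ?US = "\<lambda>u. {U. U \<subseteq> {1..n} - X1 \<and> card U = u}"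
  let ?SS = "\<lambda>u. {S. S \<subseteq> X1 \<and> card S = u - 1}"
  let ?TS = "\<lambda>U S. PiE U (\<lambda>_. {T. T \<subseteq> S \<and> card T = 3})"
  have finX1: "finite X1" using X1 finite_subset by blast
  have finV: "\<And>A. A \<subseteq> {1..n} \<Longrightarrow> finite A" using finite_subset by blast
  have finX: "\<And>A. A \<subseteq> X1 \<Longrightarrow> finite A" using finX1 finite_subset by blast
  have finTS: "finite (?TS U S)" if "finite U" "S \<subseteq> X1" for U S
  proof -
    have "finite S" using that finX1 finite_subset by blast
    have "finite {T. T \<subseteq> S \<and> card T = 3}" by (rule finite_subset[of _ "Pow S"]) (use \<open>finite S\<close> in auto)
    thus ?thesis using that by (intro finite_PiE) auto
  qed
  have "gnp_prob n p (FQ2 n X1 M) \<le> (\<Sum>u\<in>{4..M}. gnp_prob n p (\<lambda>E. \<exists>U\<in>?US u. \<exists>S\<in>?SS u. \<exists>T\<in>?TS U S. cyl (pr U T) (pr U (\<lambda>_. X1 - S)) E))"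
    unfolding FQ2_def by (rule gp_union[OF p]) simp
  also have "\<dots> \<le> (\<Sum>u\<in>{4..M}. \<Sum>U\<in>?US u. gnp_prob n p (\<lambda>E. \<exists>S\<in>?SS u. \<exists>T\<in>?TS U S. cyl (pr U T) (pr U (\<lambda>_. X1 - S)) E))"
    by (intro sum_mono gp_union[OF p]) simp
  also have "\<dots> \<le> (\<Sum>u\<in>{4..M}. \<Sum>U\<in>?US u. \<Sum>S\<in>?SS u. gnp_prob n p (\<lambda>E. \<exists>T\<in>?TS U S. cyl (pr U T) (pr U (\<lambda>_. X1 - S)) E))"
    using finX1 by (intro sum_mono gp_union[OF p]) simp
  also have "\<dots> \<le> (\<Sum>u\<in>{4..M}. \<Sum>U\<in>?US u. \<Sum>S\<in>?SS u. \<Sum>T\<in>?TS U S. p ^ card (pr U T) * (1 - p) ^ card (pr U (\<lambda>_. X1 - S)))"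
  proof (intro sum_mono gp_exists_cyl[OF p])
    fix u U S T assume U: "U \<in> ?US u" and S: "S \<in> ?SS u" and T: "T \<in> ?TS U S"
    have TX: "\<And>v. v \<in> U \<Longrightarrow> T v \<subseteq> X1" using T S by (force simp: PiE_iff)
    show "pr U T \<subseteq> all_edges n" using U TX X1 by (intro pr_AE) fastforce+
    show "pr U (\<lambda>_. X1 - S) \<subseteq> all_edges n" using U X1 by (intro pr_AE) auto
  next
    fix u U S assume U: "U \<in> ?US u" and S: "S \<in> ?SS u"
    show "finite (?TS U S)" using U S by (intro finTS finV) auto
  qed
  also have "\<dots> = (\<Sum>u\<in>{4..M}. \<Sum>U\<in>?US u. \<Sum>S\<in>?SS u. \<Sum>T\<in>?TS U S. p ^ (3 * u) * (1 - p) ^ (u * (card X1 - (u - 1))))"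
  proof (intro sum.cong refl)
    fix u U S T assume U: "U \<in> ?US u" and S: "S \<in> ?SS u" and T: "T \<in> ?TS U S"
    have finU: "finite U" using U finV by auto
    have TX: "\<And>v. v \<in> U \<Longrightarrow> T v \<subseteq> X1" using T S by (force simp: PiE_iff)
    have "card (pr U T) = (\<Sum>v\<in>U. card (T v))"
      using U TX finX by (intro pr_card finU) fastforce+
    also have "\<dots> = (\<Sum>v\<in>U. 3)" using T by (intro sum.cong) auto
    finally have c1: "card (pr U T) = 3 * u" using U by simp
    have "card (pr U (\<lambda>_. X1 - S)) = (\<Sum>v\<in>U. card (X1 - S))"
      using U finX1 by (intro pr_card finU) auto
    also have "\<dots> = u * (card X1 - (u - 1))" using U S finX[of S]
      by (simp add: card_Diff_subset)
    finally have c2: "card (pr U (\<lambda>_. X1 - S)) = u * (card X1 - (u - 1))" .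
    show "p ^ card (pr U T) * (1 - p) ^ card (pr U (\<lambda>_. X1 - S)) = p ^ (3 * u) * (1 - p) ^ (u * (card X1 - (u - 1)))"
      unfolding c1 c2 ..
  qed
  also have "\<dots> \<le> (\<Sum>u\<in>{4..M}. real (n choose u) * real (card X1 choose (u - 1))
            * real ((u - 1) choose 3) ^ u * p ^ (3 * u) * (1 - p) ^ (u * (card X1 - (u - 1))))"
  proof (intro sum_mono)
    fix u assume u: "u \<in> {4..M}"
    let ?c = "p ^ (3 * u) * (1 - p) ^ (u * (card X1 - (u - 1)))"
    have c0: "0 \<le> ?c" using p by simp
    have inner: "(\<Sum>T\<in>?TS U S. ?c) = real ((u - 1) choose 3) ^ u * ?c" if U: "U \<in> ?US u" and S: "S \<in> ?SS u" for U S
    proof -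
      have finU: "finite U" using U finV by auto
      have finS: "finite S" using S finX by auto
      have "card (?TS U S) = (\<Prod>v\<in>U. card {T. T \<subseteq> S \<and> card T = 3})" by (rule card_PiE[OF finU])
      also have "\<dots> = ((u - 1) choose 3) ^ u" using U S finS by (simp add: n_subsets)
      finally show ?thesis by simp
    qed
    have "(\<Sum>U\<in>?US u. \<Sum>S\<in>?SS u. \<Sum>T\<in>?TS U S. ?c) = (\<Sum>U\<in>?US u. \<Sum>S\<in>?SS u. real ((u - 1) choose 3) ^ u * ?c)"
      using inner by (intro sum.cong refl) auto
    also have "\<dots> = real (card (?US u)) * (real (card (?SS u)) * (real ((u - 1) choose 3) ^ u * ?c))"
      by simp
    also have "card (?SS u) = card X1 choose (u - 1)" using finX1 by (rule n_subsets)
    also have "card (?US u) = (n - card X1) choose u"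
      using X1 finX1 by (subst n_subsets) (auto simp: card_Diff_subset)
    also have "real ((n - card X1) choose u) * (real (card X1 choose (u - 1)) * (real ((u - 1) choose 3) ^ u * ?c))
        \<le> real (n choose u) * (real (card X1 choose (u - 1)) * (real ((u - 1) choose 3) ^ u * ?c))"
      using c0 by (intro mult_right_mono) (auto intro: binomial_right_mono)
    finally have "(\<Sum>U\<in>?US u. \<Sum>S\<in>?SS u. \<Sum>T\<in>?TS U S. ?c) \<le> real (n choose u) * real (card X1 choose (u - 1))
            * real ((u - 1) choose 3) ^ u * ?c" by (simp add: mult.assoc)
    thus "(\<Sum>U\<in>?US u. \<Sum>S\<in>?SS u. \<Sum>T\<in>?TS U S. ?c) \<le> real (n choose u) * real (card X1 choose (u - 1))
            * real ((u - 1) choose 3) ^ u * p ^ (3 * u) * (1 - p) ^ (u * (card X1 - (u - 1)))" by (simp add: mult.assoc)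
  qed
  finally show ?thesis .
qed

section \<open>Expansion of bad sets into W - X1\<close>

definition FQ3 :: "nat \<Rightarrow> nat set \<Rightarrow> nat \<Rightarrow> nat set set \<Rightarrow> bool" where
  "FQ3 n W' M E \<longleftrightarrow> (\<exists>u\<in>{1..M}. \<exists>U\<in>{U. U \<subseteq> {1..n} \<and> card U = u}.
      \<exists>S\<in>{S. S \<subseteq> W' \<and> card S = u - 1}. cyl {} (pr U (\<lambda>_. W' - S - U)) E)"

lemma FQ3_det:
  assumes E: "E \<subseteq> all_edges n" and nF: "\<not> FQ3 n W' M E" and W': "W' \<subseteq> {1..n}" and sM: "M \<le> card W'"
    and U: "U \<subseteq> {1..n}" "1 \<le> card U" "card U \<le> M"
  shows "card U \<le> card ((\<Union>v\<in>U. nbr E v) \<inter> W')"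
proof (rule ccontr)
  define N where "N = (\<Union>v\<in>U. nbr E v) \<inter> W'"
  define u where "u = card U"
  assume "\<not> card U \<le> card ((\<Union>v\<in>U. nbr E v) \<inter> W')"
  hence cN: "card N \<le> u - 1" unfolding N_def u_def by simp
  have finW: "finite W'" using W' finite_subset by blast
  obtain S where S: "N \<subseteq> S" "S \<subseteq> W'" "card S = u - 1"
    by (rule extend_subset[OF finW _ cN]) (use sM U in \<open>auto simp: N_def u_def\<close>)
  have "cyl {} (pr U (\<lambda>_. W' - S - U)) E"
    unfolding cyl_def pr_disj_iff
  proof (intro conjI ballI)
    fix v t assume v: "v \<in> U" and t: "t \<in> W' - S - U"
    show "{v,t} \<notin> E"
    proof
      assume "{v,t} \<in> E"
      hence "t \<in> N" using v t nbr_iff unfolding N_def by blast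
      thus False using S t by blast
    qed
  qed simp
  moreover have "u \<in> {1..M}" "U \<in> {U. U \<subseteq> {1..n} \<and> card U = u}" "S \<in> {S. S \<subseteq> W' \<and> card S = u - 1}"
    using U S unfolding u_def by auto
  ultimately have "FQ3 n W' M E" unfolding FQ3_def by blast
  thus False using nF by simp
qed

lemma FQ3_bound:
  assumes p: "0 \<le> p" "p \<le> 1" and W': "W' \<subseteq> {1..n}"
    and big: "\<And>u. u \<in> {1..M} \<Longrightarrow> c \<le> card W' - (u - 1) - u"
  shows "gnp_prob n p (FQ3 n W' M) \<le> (\<Sum>u\<in>{1..M}. real (n choose u) * real (card W' choose (u - 1)) * (1 - p) ^ (u * c))"
proof -
  let ?US = "\<lambda>u. {U. U \<subseteq> {1..n} \<and> card U = u}"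
  let ?SS = "\<lambda>u. {S. S \<subseteq> W' \<and> card S = u - 1}"
  have finW: "finite W'" using W' finite_subset by blast
  have "gnp_prob n p (FQ3 n W' M) \<le> (\<Sum>u\<in>{1..M}. gnp_prob n p (\<lambda>E. \<exists>U\<in>?US u. \<exists>S\<in>?SS u. cyl {} (pr U (\<lambda>_. W' - S - U)) E))"
    unfolding FQ3_def by (rule gp_union[OF p]) simp
  also have "\<dots> \<le> (\<Sum>u\<in>{1..M}. \<Sum>U\<in>?US u. gnp_prob n p (\<lambda>E. \<exists>S\<in>?SS u. cyl {} (pr U (\<lambda>_. W' - S - U)) E))"
    by (intro sum_mono gp_union[OF p]) simp
  also have "\<dots> \<le> (\<Sum>u\<in>{1..M}. \<Sum>U\<in>?US u. \<Sum>S\<in>?SS u. p ^ card ({}::nat set set) * (1 - p) ^ card (pr U (\<lambda>_. W' - S - U)))"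
  proof (intro sum_mono gp_exists_cyl[OF p])
    fix u U S assume U: "U \<in> ?US u" and S: "S \<in> ?SS u"
    show "pr U (\<lambda>_. W' - S - U) \<subseteq> all_edges n" using U W' by (intro pr_AE) auto
  qed (use finW in auto)
  also have "\<dots> \<le> (\<Sum>u\<in>{1..M}. \<Sum>U\<in>?US u. \<Sum>S\<in>?SS u. (1 - p) ^ (u * c))"
  proof (intro sum_mono)
    fix u U S assume u: "u \<in> {1..M}" and U: "U \<in> ?US u" and S: "S \<in> ?SS u"
    have finU: "finite U" using U finite_subset by auto
    have "card (pr U (\<lambda>_. W' - S - U)) = (\<Sum>v\<in>U. card (W' - S - U))"
      using U finW by (intro pr_card finU) auto
    also have "\<dots> = u * card (W' - S - U)" using U by simp
    finally have c2: "card (pr U (\<lambda>_. W' - S - U)) = u * card (W' - S - U)" .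
    have "card W' \<le> card (W' - S - U) + card S + card U"
    proof -
      have "W' \<subseteq> (W' - S - U) \<union> S \<union> U" by auto
      hence "card W' \<le> card ((W' - S - U) \<union> S \<union> U)" using finW finU S finite_subset
        by (intro card_mono) auto
      also have "\<dots> \<le> card (W' - S - U) + card S + card U"
        by (meson add_le_mono card_Un_le le_refl order_trans)
      finally show ?thesis .
    qed
    hence "c \<le> card (W' - S - U)" using big[OF u] U S by simp
    hence "u * c \<le> card (pr U (\<lambda>_. W' - S - U))" unfolding c2 by simp
    thus "p ^ card ({}::nat set set) * (1 - p) ^ card (pr U (\<lambda>_. W' - S - U)) \<le> (1 - p) ^ (u * c)"
      using p by (simp add: power_decreasing)
  qed
  also have "\<dots> = (\<Sum>u\<in>{1..M}. real (card (?US u)) * real (card (?SS u)) * (1 - p) ^ (u * c))"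
    by (simp add: mult.assoc)
  also have "\<dots> = (\<Sum>u\<in>{1..M}. real (n choose u) * real (card W' choose (u - 1)) * (1 - p) ^ (u * c))"
    using finW by (simp add: n_subsets)
  finally show ?thesis .
qed

lemma pow_fact_le_exp:
  fixes x :: real assumes "0 \<le> x"
  shows "x ^ k / fact k \<le> exp x"
proof -
  have s: "(\<lambda>n. x ^ n / fact n) sums exp x"
    using exp_converges[of x] by (simp add: divide_inverse mult.commute)
  have "(\<Sum>n\<in>{k}. x ^ n / fact n) \<le> suminf (\<lambda>n. x ^ n / fact n)"
    by (rule sum_le_suminf) (use s assms in \<open>auto simp: sums_iff\<close>)
  thus ?thesis using s by (simp add: sums_iff)
qed

lemma pow_fact_le_exp2:
  fixes y t :: real assumes "0 \<le> y" "0 < t"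
  shows "y ^ k / fact k \<le> (y / t) ^ k * exp t"
proof -
  have "y ^ k / fact k = (y / t) ^ k * (t ^ k / fact k)"
    using assms by (simp add: power_divide)
  also have "\<dots> \<le> (y / t) ^ k * exp t"
    using assms by (intro mult_left_mono pow_fact_le_exp) auto
  finally show ?thesis .
qed

lemma choose_le_real: "real (n choose k) \<le> real n ^ k / fact k"
proof -
  have "(n choose k) * fact k \<le> n ^ k" by (rule binomial_fact_pow)
  hence "real (n choose k) * fact k \<le> real n ^ k"
    by (metis of_nat_fact of_nat_le_iff of_nat_mult of_nat_power)
  thus ?thesis by (simp add: field_simps)
qed

lemma one_minus_pow_le_exp:
  fixes p :: real assumes "0 \<le> p" "p \<le> 1"
  shows "(1 - p) ^ j \<le> exp (- (p * j))"
proof -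
  have "1 - p \<le> exp (- p)" using exp_ge_add_one_self[of "-p"] by simp
  hence "(1 - p) ^ j \<le> exp (- p) ^ j" using assms by (intro power_mono) auto
  also have "\<dots> = exp (- (p * j))" by (simp add: exp_of_nat_mult[symmetric] mult.commute)
  finally show ?thesis .
qed

lemma exp_ln_pow: "0 < x \<Longrightarrow> exp (real j * ln x) = x ^ j"
  by (simp add: exp_of_nat_mult exp_ln)

lemma basic_facts:
  fixes n :: nat and p :: real
  assumes p: "0 \<le> p" "p \<le> 1" and dn: "10^4 * ln (real n) \<le> real n * p" and ln: "10^4 \<le> ln (real n)"
  defines "d \<equiv> real n * p"
  shows "0 < p" "1 \<le> real n" "100000000 \<le> d" "d \<le> real n" "1 \<le> ln d" "ln d \<le> d" "ln (real n) \<le> d"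
    "ln d * 5000 \<le> d"
proof -
  have l8: "(100000000::real) \<le> 10000 * ln (real n)" using ln by simp
  have dn': "10000 * ln (real n) \<le> real n * p" using dn by simp
  have "0 < real n * p" using dn' l8 by linarith
  hence n0: "0 < real n" and p0: "0 < p" using p by (auto simp: zero_less_mult_iff)
  show "0 < p" by fact
  show "1 \<le> real n" using n0 by (simp add: Suc_le_eq)
  show dge: "100000000 \<le> d" unfolding d_def using dn' l8 by simp
  show "d \<le> real n" unfolding d_def using p n0 by (simp add: mult_left_le)
  have "exp 1 \<le> d" using exp_le dge by linarith
  hence "ln (exp 1) \<le> ln d" using dge by (subst ln_le_cancel_iff) auto
  thus "1 \<le> ln d" by simp
  have dpos: "0 < d" using dge by simp
  have sq: "sqrt d * sqrt d = d" using dpos by simp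
  have sqge: "10000 \<le> sqrt d" using dge real_le_rsqrt[of "10000" d] by simp
  have "ln d = 2 * ln (sqrt d)" using dpos by (simp add: ln_sqrt)
  also have "\<dots> \<le> 2 * (sqrt d - 1)" using ln_le_minus_one[of "sqrt d"] dpos by simp
  finally have l2: "ln d \<le> 2 * sqrt d" by simp
  have "ln d * 5000 \<le> 10000 * sqrt d" using l2 by simp
  also have "\<dots> \<le> sqrt d * sqrt d" using sqge dpos by (intro mult_right_mono) auto
  finally show l3: "ln d * 5000 \<le> d" using sq by simp
  thus "ln d \<le> d" using \<open>1 \<le> ln d\<close> by linarith
  show "ln (real n) \<le> d" unfolding d_def using dn ln by simp
qed

lemma inv_pow_exp: "0 < x \<Longrightarrow> exp (- (real j * ln x)) = 1 / x ^ j"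
  by (simp add: exp_minus exp_ln_pow field_simps)

lemma deg_num:
  fixes n k :: nat and p d :: real
  assumes p: "0 < p" "p \<le> 1" and d: "d = real n * p" and n1: "1 \<le> real n"
    and lnd: "ln (real n) \<le> d" and k: "k = nat \<lceil>9 * d\<rceil>"
  shows "real n * real (n choose k) * p ^ k \<le> 1 / real n ^ 4"
proof -
  have dpos: "0 < d" using d p n1 by simp
  have k9: "9 * d \<le> real k" using k dpos by linarith
  have kpos: "0 < real k" using k9 dpos by linarith
  have "real (n choose k) * p ^ k \<le> real n ^ k / fact k * p ^ k"
    using p by (intro mult_right_mono choose_le_real) auto
  also have "\<dots> = d ^ k / fact k" unfolding d by (simp add: power_mult_distrib)
  also have "\<dots> \<le> (d / real k) ^ k * exp (real k)"
    using dpos kpos by (intro pow_fact_le_exp2) auto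
  also have "\<dots> \<le> (1 / 9) ^ k * 3 ^ k"
  proof (intro mult_mono power_mono)
    show "d / real k \<le> 1 / 9" using k9 kpos dpos by (simp add: field_simps)
    show "exp (real k) \<le> 3 ^ k"
      using power_mono[OF exp_le, of k] by (simp add: exp_of_nat_mult[symmetric])
  qed (use dpos kpos in auto)
  also have "\<dots> = (1 / 9 * 3) ^ k" by (simp only: power_mult_distrib)
  also have "\<dots> = 1 / 3 ^ k" by (simp add: power_one_over)
  also have "\<dots> \<le> 1 / exp (real k)"
  proof -
    have "exp (real k) \<le> 3 ^ k"
      using power_mono[OF exp_le, of k] by (simp add: exp_of_nat_mult[symmetric])
    thus ?thesis by (intro divide_left_mono) auto
  qed
  also have "\<dots> = exp (- real k)" by (simp add: exp_minus field_simps)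
  also have "\<dots> \<le> exp (- (real 5 * ln (real n)))" using k9 lnd by simp
  also have "\<dots> = 1 / real n ^ 5" using n1 by (intro inv_pow_exp) auto
  finally have "real (n choose k) * p ^ k \<le> 1 / real n ^ 5" .
  hence "real n * (real (n choose k) * p ^ k) \<le> real n * (1 / real n ^ 5)"
    using n1 by (intro mult_left_mono) auto
  also have "\<dots> = 1 / real n ^ 4" using n1 by (simp add: field_simps eval_nat_numeral)
  finally show ?thesis by (simp add: mult.assoc)
qed

lemma choose_le_pow_nat: "n choose k \<le> n ^ k"
proof -
  have "(n choose k) * 1 \<le> (n choose k) * fact k" by (intro mult_left_mono) (auto simp: fact_ge_1)
  also have "\<dots> \<le> n ^ k" by (rule binomial_fact_pow)
  finally show ?thesis by simp
qed

lemma choose_le_pow_real: "real (n choose k) \<le> real n ^ k"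
  using choose_le_pow_nat[of n k] by (metis of_nat_le_iff of_nat_power)

lemma q_bound:
  fixes p :: real
  assumes fin: "finite X1" and p: "0 \<le> p" "p \<le> 1" and sp: "1 \<le> real (card X1) * p"
  shows "(\<Sum>T\<in>{T. T \<subseteq> X1 \<and> card T \<le> 2}. p ^ card T * (1 - p) ^ (card X1 - card T))
          \<le> 3 * (real (card X1) * p) ^ 2 * (1 - p) ^ (card X1 - 2)"
proof -
  let ?s = "card X1"
  let ?TS = "{T. T \<subseteq> X1 \<and> card T \<le> 2}"
  let ?F = "\<lambda>j. {T. T \<subseteq> X1 \<and> card T = j}"
  have finF: "\<And>j. finite (?F j)" by (rule finite_subset[of _ "Pow X1"]) (use fin in auto)
  have "(\<Sum>T\<in>?TS. p ^ card T * (1 - p) ^ (?s - card T)) \<le> (\<Sum>T\<in>?TS. p ^ card T * (1 - p) ^ (?s - 2))"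
    using p by (intro sum_mono mult_left_mono power_decreasing) auto
  also have "\<dots> = (\<Sum>T\<in>?TS. p ^ card T) * (1 - p) ^ (?s - 2)" by (simp add: sum_distrib_right)
  finally have "(\<Sum>T\<in>?TS. p ^ card T * (1 - p) ^ (?s - card T)) \<le> (\<Sum>T\<in>?TS. p ^ card T) * (1 - p) ^ (?s - 2)" .
  have "(\<Sum>T\<in>?TS. p ^ card T) = (\<Sum>j\<in>{..2::nat}. \<Sum>T\<in>?F j. p ^ card T)"
  proof -
    have eq: "?TS = (\<Union>j\<in>{..2::nat}. ?F j)" by auto
    show ?thesis unfolding eq by (rule sum.UNION_disjoint) (use finF in auto)
  qed
  also have "\<dots> = (\<Sum>j\<in>{..2::nat}. real (?s choose j) * p ^ j)"
    by (intro sum.cong refl) (simp add: n_subsets[OF fin])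
  also have "\<dots> = 1 + real ?s * p + real (?s choose 2) * p ^ 2"
    by (simp add: eval_nat_numeral)
  also have "\<dots> \<le> 3 * (real ?s * p) ^ 2"
  proof -
    define x where "x = real ?s * p"
    have x1: "1 \<le> x" using sp unfolding x_def .
    have "real (?s choose 2) \<le> real ?s ^ 2" by (rule choose_le_pow_real)
    hence "real (?s choose 2) * p ^ 2 \<le> real ?s ^ 2 * p ^ 2" using p by (intro mult_right_mono) auto
    also have "real ?s ^ 2 * p ^ 2 = x ^ 2" unfolding x_def by (simp add: power_mult_distrib)
    finally have c2: "real (?s choose 2) * p ^ 2 \<le> x ^ 2" .
    have "x * 1 \<le> x * x" using x1 by (intro mult_left_mono) auto
    hence xx: "x \<le> x ^ 2" by (simp add: power2_eq_square)
    have "1 \<le> x ^ 2" using x1 by (rule one_le_power)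
    thus ?thesis using c2 xx unfolding x_def by linarith
  qed
  finally have "(\<Sum>T\<in>?TS. p ^ card T) \<le> 3 * (real ?s * p) ^ 2" .
  hence "(\<Sum>T\<in>?TS. p ^ card T) * (1 - p) ^ (?s - 2) \<le> 3 * (real ?s * p) ^ 2 * (1 - p) ^ (?s - 2)"
    using p by (intro mult_right_mono) auto
  thus ?thesis using \<open>(\<Sum>T\<in>?TS. p ^ card T * (1 - p) ^ (?s - card T)) \<le> (\<Sum>T\<in>?TS. p ^ card T) * (1 - p) ^ (?s - 2)\<close>
    by linarith
qed

lemma FB_num:
  fixes n b :: nat and p d q :: real
  assumes d: "d = real n * p" and p: "0 < p" and n1: "1 \<le> real n" and dge: "100000000 \<le> d"
    and lnd: "ln (real n) \<le> d" and q0: "0 \<le> q" and q: "q \<le> 1 / d ^ 67"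
    and b: "b = nat \<lceil>real n / d ^ 3\<rceil>"
  shows "real (n choose b) * q ^ b \<le> 1 / real n ^ 4"
proof -
  have dpos: "0 < d" using dge by simp
  have bge: "real n / d ^ 3 \<le> real b" using b by linarith
  have "0 < real n / d ^ 3" using n1 dpos by simp
  hence b1: "1 \<le> b" using b by linarith
  hence bpos: "0 < real b" by simp
  have nb: "real n \<le> real b * d ^ 3" using bge dpos by (simp add: field_simps)
  have "real (n choose b) * q ^ b \<le> real n ^ b / fact b * q ^ b"
    using q0 by (intro mult_right_mono choose_le_real) auto
  also have "\<dots> = (real n * q) ^ b / fact b" by (simp add: power_mult_distrib)
  also have "\<dots> \<le> (real n * q / real b) ^ b * exp (real b)"
    using bpos q0 n1 by (intro pow_fact_le_exp2) auto
  also have "\<dots> = (real n * q / real b * exp 1) ^ b"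
  proof -
    have "exp (real b) = exp 1 ^ b" using exp_of_nat_mult[of b 1] by simp
    thus ?thesis by (simp only: power_mult_distrib)
  qed
  also have "\<dots> \<le> (1 / d ^ 63) ^ b"
  proof (intro power_mono)
    have "q * real n \<le> q * (real b * d ^ 3)" using nb q0 by (rule mult_left_mono)
    hence "real n * q / real b \<le> d ^ 3 * q" using bpos by (simp add: field_simps)
    also have "\<dots> \<le> d ^ 3 * (1 / d ^ 67)" using q dpos by (intro mult_left_mono) auto
    also have "\<dots> = 1 / d ^ 64"
    proof -
      show ?thesis using dpos by (simp add: power_add[of d 3 64, simplified] field_simps)
    qed
    finally have "real n * q / real b * exp 1 \<le> 1 / d ^ 64 * 3"
      using exp_le by (intro mult_mono) auto
    also have "\<dots> \<le> 1 / d ^ 63"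
    proof -
      have e: "d ^ 64 = d * d ^ 63" by (simp flip: power_Suc)
      have "3 * d ^ 63 \<le> d * d ^ 63" using dge by (intro mult_right_mono) auto
      thus ?thesis unfolding e using dpos by (simp add: field_simps)
    qed
    finally show "real n * q / real b * exp 1 \<le> 1 / d ^ 63" .
    show "0 \<le> real n * q / real b * exp 1" using q0 bpos by simp
  qed
  also have "\<dots> \<le> 1 / real n ^ 4"
  proof (cases "ln (real n) \<le> real b")
    case True
    have "1 / d ^ 63 \<le> exp (- 4)"
    proof -
      have "exp 4 \<le> (3::real) ^ 4" using power_mono[OF exp_le, of 4] by (simp add: exp_of_nat_mult[symmetric])
      also have "\<dots> \<le> d" using dge by simp
      also have "d \<le> d ^ 63" using dge power_increasing[of 1 63 d] by simp
      finally show ?thesis using dpos by (simp add: exp_minus field_simps)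
    qed
    hence "(1 / d ^ 63) ^ b \<le> exp (- 4) ^ b" using dpos by (intro power_mono) auto
    also have "\<dots> = exp (- (4 * real b))" by (simp add: exp_of_nat_mult[symmetric] mult.commute)
    also have "\<dots> \<le> exp (- (real 4 * ln (real n)))" using True by simp
    also have "\<dots> = 1 / real n ^ 4" using n1 by (intro inv_pow_exp) auto
    finally show ?thesis .
  next
    case False
    have "real n \<le> real b * d ^ 3" by (rule nb)
    also have "\<dots> \<le> d * d ^ 3" using False lnd dpos by (intro mult_right_mono) auto
    also have "d * d ^ 3 = d ^ 4" by (simp add: power_add[of d 1 3, simplified])
    finally have nd: "real n \<le> d ^ 4" .
    have "(1 / d ^ 63) ^ b \<le> (1 / d ^ 63) ^ 1"
      using b1 dge by (intro power_decreasing) (auto simp: field_simps)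
    also have "\<dots> \<le> 1 / d ^ 16"
    proof -
      have "d ^ 16 \<le> d ^ 63" using dge by (intro power_increasing) auto
      thus ?thesis using dpos by (simp add: frac_le)
    qed
    also have "\<dots> = 1 / (d ^ 4) ^ 4" by (simp flip: power_mult)
    also have "\<dots> \<le> 1 / real n ^ 4" using nd n1 by (intro divide_left_mono power_mono mult_pos_pos) auto
    finally show ?thesis .
  qed
  finally show ?thesis .
qed

lemma pow_gap:
  fixes d c :: real assumes "1 \<le> d" "c \<le> d" "i < j"
  shows "c * d ^ i \<le> d ^ j"
proof -
  have "d ^ j = d ^ i * d ^ (j - i)" using assms by (simp flip: power_add)
  moreover have "d \<le> d ^ (j - i)" using assms power_increasing[of 1 "j - i" d] by simp
  ultimately show ?thesis using assms
    by (metis mult.commute mult_right_mono order.trans zero_le_power dual_order.trans zero_le_one)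
qed

lemma inv_fact_le: "1 / fact u \<le> (3 / real u) ^ u"
proof (cases "u = 0")
  case True thus ?thesis by simp
next
  case False
  have "real u ^ u / fact u \<le> exp (real u)" by (rule pow_fact_le_exp) auto
  also have "\<dots> \<le> 3 ^ u" using power_mono[OF exp_le, of u] by (simp add: exp_of_nat_mult[symmetric])
  finally have "real u ^ u / fact u \<le> 3 ^ u" .
  hence "1 / fact u \<le> 3 ^ u / real u ^ u" using False by (simp add: field_simps)
  thus ?thesis by (simp add: power_divide)
qed

lemma FQ2_term:
  fixes n s u :: nat and p d m :: real
  assumes p: "0 < p" "p \<le> 1" and d: "d = real n * p" and n1: "1 \<le> real n"
    and dge: "100000000 \<le> d" and lnd1: "1 \<le> ln d" and lndd: "ln d \<le> d" and lnn: "ln (real n) \<le> d"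
    and m: "m = 10 * ln d / p" and u4: "4 \<le> u" and um: "real u \<le> m"
    and s1: "7 * m - 1 < real s" and s2: "real s \<le> 7 * m"
  shows "real (n choose u) * real (s choose (u - 1)) * real ((u - 1) choose 3) ^ u * p ^ (3 * u)
           * (1 - p) ^ (u * (s - (u - 1))) \<le> 1 / real n ^ 4"
proof -
  have dpos: "0 < d" using dge by simp
  have m10: "10 \<le> m" using lnd1 p unfolding m by (simp add: field_simps)
  have us: "u \<le> s" using um s1 m10 by simp
  have u0: "0 < u" using u4 by simp
  have mp: "m * p = 10 * ln d" unfolding m using p by simp
  have B1: "real (n choose u) \<le> real n ^ u / fact u" by (rule choose_le_real)
  have B2: "real (s choose (u - 1)) \<le> real s ^ u / fact u"
  proof -
    have "real (s choose (u - 1)) \<le> real s ^ (u - 1) / fact (u - 1)" by (rule choose_le_real)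
    also have "\<dots> = real u * real s ^ (u - 1) / fact u"
      using u0 by (simp add: fact_reduce[of u] field_simps)
    also have "\<dots> \<le> real s * real s ^ (u - 1) / fact u"
      using us by (intro divide_right_mono mult_right_mono) auto
    also have "real s * real s ^ (u - 1) = real s ^ u" using u0 by (simp flip: power_Suc)
    finally show ?thesis .
  qed
  have B3: "real ((u - 1) choose 3) ^ u \<le> (real u ^ 3) ^ u"
  proof (intro power_mono)
    have "real ((u - 1) choose 3) \<le> real (u - 1) ^ 3" by (rule choose_le_pow_real)
    also have "\<dots> \<le> real u ^ 3" by (intro power_mono) auto
    finally show "real ((u - 1) choose 3) \<le> real u ^ 3" .
  qed auto
  have B4: "(1 - p) ^ (u * (s - (u - 1))) \<le> (1 / d ^ 60) ^ u"
  proof -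
    have "(1 - p) ^ (u * (s - (u - 1))) \<le> exp (- (p * real (u * (s - (u - 1)))))"
      using p by (intro one_minus_pow_le_exp) auto
    also have "\<dots> \<le> exp (- (real (60 * u) * ln d))"
    proof -
      have "real (s - (u - 1)) = real s - real u + 1" using us u0 by (simp add: of_nat_diff)
      hence "6 * m \<le> real (s - (u - 1))" using s1 um by linarith
      hence "real u * (6 * m) \<le> real u * real (s - (u - 1))" by (intro mult_left_mono) auto
      hence "p * (real u * (6 * m)) \<le> p * (real u * real (s - (u - 1)))" by (rule mult_left_mono) (use p in auto)
      moreover have "p * (real u * (6 * m)) = real (60 * u) * ln d" using mp by (simp add: algebra_simps)
      ultimately show ?thesis by simp
    qed
    also have "\<dots> = 1 / d ^ (60 * u)" using dpos by (rule inv_pow_exp)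
    also have "\<dots> = (1 / d ^ 60) ^ u" by (simp add: power_mult power_one_over)
    finally show ?thesis .
  qed
  define X where "X = real n * real s * real u ^ 3 * p ^ 3 / d ^ 60"
  have X0: "0 \<le> X" unfolding X_def using p dpos by simp
  have "real (n choose u) * real (s choose (u - 1)) * real ((u - 1) choose 3) ^ u * p ^ (3 * u)
           * (1 - p) ^ (u * (s - (u - 1)))
        \<le> real n ^ u / fact u * (real s ^ u / fact u) * (real u ^ 3) ^ u * p ^ (3 * u) * (1 / d ^ 60) ^ u"
    using B1 B2 B3 B4 p by (intro mult_mono) (auto intro!: mult_nonneg_nonneg)
  also have "\<dots> = X ^ u * (1 / fact u) * (1 / fact u)"
    unfolding X_def by (simp add: power_mult_distrib power_divide power_mult[symmetric] mult.commute)
  also have "\<dots> \<le> X ^ u * (3 / real u) ^ u * (3 / real u) ^ u"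
    using X0 inv_fact_le by (intro mult_mono) auto
  also have "\<dots> = (X * 9 / real u ^ 2) ^ u"
  proof -
    have nine: "(3::real) ^ u * 3 ^ u = 9 ^ u" by (simp flip: power_mult_distrib)
    show ?thesis by (simp add: power_mult_distrib power_divide power2_eq_square nine)
  qed
  also have "X * 9 / real u ^ 2 = 9 * d * (real s * p) * (real u * p) / d ^ 60"
    unfolding X_def d using u0 by (simp add: field_simps power2_eq_square eval_nat_numeral)
  finally have T: "real (n choose u) * real (s choose (u - 1)) * real ((u - 1) choose 3) ^ u * p ^ (3 * u)
           * (1 - p) ^ (u * (s - (u - 1))) \<le> (9 * d * (real s * p) * (real u * p) / d ^ 60) ^ u" .
  define A where "A = 9 * d * (real s * p) * (real u * p) / d ^ 60"
  have A0: "0 \<le> A" unfolding A_def using p dpos by simp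
  have sp: "real s * p \<le> 70 * d"
  proof -
    have "real s * p \<le> 7 * m * p" using s2 p by (intro mult_right_mono) auto
    thus ?thesis using mp lndd by simp
  qed
  have "A ^ u \<le> 1 / real n ^ 4"
  proof (cases "real u \<le> ln (real n)")
    case True
    have "real u * p \<le> d * p" using True lnn p by (intro mult_right_mono) auto
    also have "\<dots> = d * d / real n" unfolding d using n1 by simp
    finally have up: "real u * p \<le> d * d / real n" .
    have "(real s * p) * (real u * p) \<le> (70 * d) * (d * d / real n)" by (rule mult_mono[OF sp up]) (use p dpos in auto)
    hence "9 * d * ((real s * p) * (real u * p)) \<le> 9 * d * ((70 * d) * (d * d / real n))" using dpos by (intro mult_left_mono) auto
    hence "9 * d * (real s * p) * (real u * p) \<le> 9 * d * (70 * d) * (d * d / real n)" by (simp only: mult.assoc)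
    hence "A \<le> 9 * d * (70 * d) * (d * d / real n) / d ^ 60"
      unfolding A_def by (rule divide_right_mono) (use dpos in auto)
    also have "\<dots> = (630 * d ^ 4) / d ^ 60 / real n" by (simp add: field_simps eval_nat_numeral)
    also have "\<dots> \<le> 1 / real n"
    proof -
      have "630 * d ^ 4 \<le> d ^ 60" using dge by (intro pow_gap) auto
      thus ?thesis using dpos n1 by (simp add: field_simps)
    qed
    finally have A1: "A \<le> 1 / real n" .
    have "1 / real n \<le> 1" using n1 by simp
    hence "A \<le> 1" using A1 by linarith
    hence "A ^ u \<le> A ^ 4" using A0 u4 by (intro power_decreasing) auto
    also have "\<dots> \<le> (1 / real n) ^ 4" using A0 A1 by (intro power_mono) auto
    finally show ?thesis by (simp add: power_one_over)
  next
    case False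
    have "real u * p \<le> m * p" using um p by (intro mult_right_mono) auto
    hence up: "real u * p \<le> 10 * d" using mp lndd by simp
    have "(real s * p) * (real u * p) \<le> (70 * d) * (10 * d)" by (rule mult_mono[OF sp up]) (use p dpos in auto)
    hence "9 * d * ((real s * p) * (real u * p)) \<le> 9 * d * ((70 * d) * (10 * d))" using dpos by (intro mult_left_mono) auto
    hence "9 * d * (real s * p) * (real u * p) \<le> 9 * d * (70 * d) * (10 * d)" by (simp only: mult.assoc)
    hence "A \<le> 9 * d * (70 * d) * (10 * d) / d ^ 60"
      unfolding A_def by (rule divide_right_mono) (use dpos in auto)
    also have "\<dots> = 6300 * d ^ 3 / d ^ 60" by (simp add: field_simps eval_nat_numeral)
    also have "\<dots> \<le> exp (- 4)"
    proof -
      have "exp 4 \<le> (3::real) ^ 4" using power_mono[OF exp_le, of 4] by (simp add: exp_of_nat_mult[symmetric])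
      hence "exp 4 * (6300 * d ^ 3) \<le> 81 * (6300 * d ^ 3)" using dpos by (intro mult_right_mono) auto
      also have "\<dots> = 510300 * d ^ 3" by simp
      also have "\<dots> \<le> d ^ 60" using dge by (intro pow_gap) auto
      finally show ?thesis using dpos by (simp add: exp_minus field_simps)
    qed
    finally have A1: "A \<le> exp (- 4)" .
    have "A ^ u \<le> exp (- 4) ^ u" using A0 A1 by (intro power_mono) auto
    also have "\<dots> = exp (- (4 * real u))" by (simp add: exp_of_nat_mult[symmetric] mult.commute)
    also have "\<dots> \<le> exp (- (real 4 * ln (real n)))" using False by simp
    also have "\<dots> = 1 / real n ^ 4" using n1 by (intro inv_pow_exp) auto
    finally show ?thesis .
  qed
  thus ?thesis using T unfolding A_def by linarith
qed

lemma FQ3_term: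
  fixes n w u c :: nat and p d :: real
  assumes p: "0 < p" "p \<le> 1" and d: "d = real n * p" and n1: "1 \<le> real n"
    and lnn: "48 * ln (real n) \<le> d" and u1: "1 \<le> u" and wn: "w \<le> n" and c: "real n / 8 \<le> real c"
  shows "real (n choose u) * real (w choose (u - 1)) * (1 - p) ^ (u * c) \<le> 1 / real n ^ 4"
proof -
  have B1: "real (n choose u) \<le> real n ^ u" by (rule choose_le_pow_real)
  have B2: "real (w choose (u - 1)) \<le> real n ^ u"
  proof -
    have "real (w choose (u - 1)) \<le> real w ^ (u - 1)" by (rule choose_le_pow_real)
    also have "\<dots> \<le> real n ^ (u - 1)" using wn by (intro power_mono) auto
    also have "\<dots> \<le> real n ^ u" using n1 by (intro power_increasing) auto
    finally show ?thesis .
  qed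
  have B3: "(1 - p) ^ (u * c) \<le> exp (- (d / 8)) ^ u"
  proof -
    have "(1 - p) ^ (u * c) \<le> exp (- (p * real (u * c)))" using p by (intro one_minus_pow_le_exp) auto
    also have "\<dots> \<le> exp (- (real u * (d / 8)))"
    proof -
      have "p * (real n / 8) \<le> p * real c" using c p by (intro mult_left_mono) auto
      hence "real u * (p * (real n / 8)) \<le> real u * (p * real c)" by (rule mult_left_mono) auto
      thus ?thesis unfolding d by (simp add: algebra_simps)
    qed
    also have "\<dots> = exp (- (d / 8)) ^ u" by (simp add: exp_of_nat_mult[symmetric])
    finally show ?thesis .
  qed
  have base: "real n ^ 2 * exp (- (d / 8)) \<le> 1 / real n ^ 4"
  proof -
    have "exp (- (d / 8)) \<le> exp (- (real 6 * ln (real n)))" using lnn by simp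
    also have "\<dots> = 1 / real n ^ 6" using n1 by (intro inv_pow_exp) auto
    finally have "real n ^ 2 * exp (- (d / 8)) \<le> real n ^ 2 * (1 / real n ^ 6)"
      by (intro mult_left_mono) auto
    also have "\<dots> = 1 / real n ^ 4" using n1 by (simp add: field_simps eval_nat_numeral)
    finally show ?thesis .
  qed
  have "real (n choose u) * real (w choose (u - 1)) * (1 - p) ^ (u * c)
      \<le> real n ^ u * real n ^ u * exp (- (d / 8)) ^ u"
    using B1 B2 B3 p by (intro mult_mono) auto
  also have "\<dots> = (real n ^ 2 * exp (- (d / 8))) ^ u" by (simp add: power_mult_distrib power2_eq_square)
  also have "\<dots> \<le> (real n ^ 2 * exp (- (d / 8))) ^ 1"
  proof (intro power_decreasing)
    show "real n ^ 2 * exp (- (d / 8)) \<le> 1" using base n1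
      by (smt (verit) divide_le_eq_1 one_le_power)
  qed (use u1 in auto)
  also have "\<dots> \<le> 1 / real n ^ 4" using base by simp
  finally show ?thesis .
qed

lemma gp_or:
  assumes "0 \<le> p" "p \<le> 1"
  shows "gnp_prob n p (\<lambda>E. P E \<or> Q E) \<le> gnp_prob n p P + gnp_prob n p Q"
  unfolding gp_alt sum.distrib[symmetric] using wt_nonneg[OF assms]
  by (intro sum_mono) auto

lemma main_n:
  fixes n :: nat and p :: real and W :: "nat set"
  assumes p: "0 \<le> p" "p \<le> 1" and dn: "10^4 * ln (real n) \<le> real n * p" and ln: "10^4 \<le> ln (real n)"
    and W: "W \<subseteq> {1..n}" and cW: "3 * real n / 8 \<le> real (card W)"
  shows "1 - gnp_prob n p (\<lambda>E. let m = 10 * ln (real n * p) / p in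
               \<exists>X. X \<subseteq> W \<and> real (card X) \<le> 8 * m \<and>
                 (\<forall>U. U \<subseteq> {1..n} - X \<and> real (card U) \<le> m \<longrightarrow>
                      card (nbr_in E U X) \<ge> card U)) \<le> 4 / real n ^ 3"
proof -
  define d where "d = real n * p"
  define m where "m = 10 * ln d / p"
  note bf = basic_facts[OF p dn ln, folded d_def]
  have p0: "0 < p" and n1: "1 \<le> real n" and dge: "100000000 \<le> d" and dn': "d \<le> real n"
    and lnd1: "1 \<le> ln d" and lndd: "ln d \<le> d" and lnn: "ln (real n) \<le> d" and l5: "ln d * 5000 \<le> d"
    using bf by auto
  have dpos: "0 < d" using dge by simp
  have pd: "p = d / real n" unfolding d_def using n1 by simp
  have mp: "m * p = 10 * ln d" unfolding m_def using p0 by simp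
  have m10: "10 \<le> m" using lnd1 p0 p(2) unfolding m_def by (simp add: field_simps)
  have mn: "m \<le> real n / 500"
  proof -
    have "m * d = 10 * ln d * real n" using mp unfolding pd using n1 by (simp add: field_simps)
    also have "\<dots> \<le> d / 500 * real n" using l5 n1 by (intro mult_right_mono) auto
    finally have "m * d \<le> real n / 500 * d" by (simp add: algebra_simps)
    thus ?thesis using dpos by simp
  qed
  have lnn48: "48 * ln (real n) \<le> d" using dn ln unfolding d_def by simp
  define s where "s = nat \<lfloor>7 * m\<rfloor>"
  have s1: "7 * m - 1 < real s" and s2: "real s \<le> 7 * m" unfolding s_def using m10 by linarith+
  have finW: "finite W" using W finite_subset by blast
  have "s \<le> card W" using s2 mn cW n1 by linarith
  then obtain X1 where X1: "X1 \<subseteq> W" "card X1 = s" by (rule obtain_subset_with_card_n)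
  have X1n: "X1 \<subseteq> {1..n}" using X1 W by auto
  define W' where "W' = W - X1"
  have W'n: "W' \<subseteq> {1..n}" using W unfolding W'_def by auto
  have cW': "real (card W') \<ge> 3 * real n / 8 - 7 * m"
  proof -
    have "card W' = card W - s" unfolding W'_def using X1 finW by (simp add: card_Diff_subset finite_subset)
    thus ?thesis using \<open>s \<le> card W\<close> cW s2 by (simp add: of_nat_diff)
  qed
  have cW'n: "card W' \<le> n" using W'n card_mono[of "{1..n}" W'] by simp
  define M where "M = nat \<lfloor>m\<rfloor>"
  have M1: "real M \<le> m" unfolding M_def using m10 by linarith
  have Mn: "M \<le> n" using M1 mn n1 by linarith
  have Ms: "M \<le> card X1" using M1 s1 m10 X1 by linarith
  have MW': "M \<le> card W'" using M1 cW' mn m10 by linarith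
  define k where "k = nat \<lceil>9 * d\<rceil>"
  define b where "b = nat \<lceil>real n / d ^ 3\<rceil>"
  define c where "c = nat \<lceil>real n / 8\<rceil>"
  have num: "real (card X1) + real (b - 1) * real k \<le> 8 * m"
  proof -
    have b1: "real (b - 1) \<le> real n / d ^ 3"
    proof (cases "b = 0")
      case True thus ?thesis using n1 dpos by simp
    next
      case False
      hence "real (b - 1) = real b - 1" by (simp add: of_nat_diff)
      thus ?thesis unfolding b_def by linarith
    qed
    have k1: "real k \<le> 10 * d" unfolding k_def using dpos dge by linarith
    have "real (b - 1) * real k \<le> real n / d ^ 3 * (10 * d)" using b1 k1 by (intro mult_mono) auto
    also have "\<dots> = 10 * real n / d ^ 2" using dpos by (simp add: field_simps power2_eq_square eval_nat_numeral)
    also have "\<dots> \<le> m"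
    proof -
      have "m = 10 * real n * ln d / d" unfolding m_def pd using n1 by (simp add: field_simps)
      moreover have "10 * real n / d ^ 2 \<le> 10 * real n * ln d / d"
      proof -
        have "10 * real n * 1 \<le> 10 * real n * (ln d * d)" using lnd1 dge n1
          by (intro mult_left_mono) (auto intro: order.trans[OF _ mult_mono[of 1 "ln d" 1 d]])
        thus ?thesis using dpos by (simp add: field_simps power2_eq_square)
      qed
      ultimately show ?thesis by simp
    qed
    finally show ?thesis using X1 s2 by simp
  qed
  let ?good = "\<lambda>E. let m = 10 * ln (real n * p) / p in
               \<exists>X. X \<subseteq> W \<and> real (card X) \<le> 8 * m \<and>
                 (\<forall>U. U \<subseteq> {1..n} - X \<and> real (card U) \<le> m \<longrightarrow>
                      card (nbr_in E U X) \<ge> card U)"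
  have red: "(Fdeg n k E \<or> FB n X1 b E) \<or> (FQ2 n X1 M E \<or> FQ3 n W' M E)"
    if E: "E \<subseteq> all_edges n" and ng: "\<not> ?good E" for E
  proof (rule ccontr)
    assume "\<not> ((Fdeg n k E \<or> FB n X1 b E) \<or> (FQ2 n X1 M E \<or> FQ3 n W' M E))"
    hence nF: "\<not> Fdeg n k E" "\<not> FB n X1 b E" "\<not> FQ2 n X1 M E" "\<not> FQ3 n W' M E" by auto
    have "\<exists>X. X \<subseteq> W \<and> real (card X) \<le> 8 * m \<and>
           (\<forall>U. U \<subseteq> {1..n} - X \<and> real (card U) \<le> m \<longrightarrow> card (nbr_in E U X) \<ge> card U)"
    proof (rule det[OF E W X1(1), where k = k and \<beta> = "b - 1" and M = M])
      show "\<And>v. v \<in> {1..n} \<Longrightarrow> card (nbr E v) \<le> k" using Fdeg_det[OF E nF(1)] by blast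
      show "card {v \<in> {1..n} - X1. card (nbr E v \<inter> X1) \<le> 2} \<le> b - 1"
        using FB_det[OF E nF(2)] by linarith
      show "\<And>U. U \<subseteq> {1..n} - X1 \<Longrightarrow> \<forall>v\<in>U. 3 \<le> card (nbr E v \<inter> X1) \<Longrightarrow> 4 \<le> card U \<Longrightarrow>
            card U \<le> M \<Longrightarrow> card U \<le> card ((\<Union>v\<in>U. nbr E v) \<inter> X1)"
        using FQ2_det[OF E nF(3) X1n Ms] by blast
      show "\<And>U. U \<subseteq> {1..n} \<Longrightarrow> 1 \<le> card U \<Longrightarrow> card U \<le> M \<Longrightarrow>
            card U \<le> card ((\<Union>v\<in>U. nbr E v) \<inter> (W - X1))"
        using FQ3_det[OF E nF(4) W'n MW'] unfolding W'_def by blast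
      show "real (card X1) + real (b - 1) * real k \<le> 8 * m" by (rule num)
      show "M = nat \<lfloor>m\<rfloor>" by (rule M_def)
    qed
    hence "?good E" unfolding m_def d_def Let_def .
    thus False using ng by simp
  qed
  have "1 - gnp_prob n p ?good = gnp_prob n p (\<lambda>E. \<not> ?good E)" by (rule gp_compl)
  also have "\<dots> \<le> gnp_prob n p (\<lambda>E. (Fdeg n k E \<or> FB n X1 b E) \<or> (FQ2 n X1 M E \<or> FQ3 n W' M E))"
    using red p by (intro gp_mono) auto
  also have "\<dots> \<le> (gnp_prob n p (Fdeg n k) + gnp_prob n p (FB n X1 b)) + (gnp_prob n p (FQ2 n X1 M) + gnp_prob n p (FQ3 n W' M))"
    using gp_or[OF p, of n "\<lambda>E. Fdeg n k E \<or> FB n X1 b E" "\<lambda>E. FQ2 n X1 M E \<or> FQ3 n W' M E"]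
      gp_or[OF p, of n "Fdeg n k" "FB n X1 b"] gp_or[OF p, of n "FQ2 n X1 M" "FQ3 n W' M"]
    by linarith
  also have "\<dots> \<le> (1 / real n ^ 4 + 1 / real n ^ 4) + (real n * (1 / real n ^ 4) + real n * (1 / real n ^ 4))"
  proof (intro add_mono)
    show "gnp_prob n p (Fdeg n k) \<le> 1 / real n ^ 4"
      using Fdeg_bound[OF p, of n k] deg_num[OF p0 p(2) d_def n1 lnn k_def] by linarith
    show "gnp_prob n p (FB n X1 b) \<le> 1 / real n ^ 4"
    proof -
      define q where "q = (\<Sum>T\<in>{T. T \<subseteq> X1 \<and> card T \<le> 2}. p ^ card T * (1 - p) ^ (card X1 - card T))"
      have q0: "0 \<le> q" unfolding q_def using p by (intro sum_nonneg) auto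
      have finX1: "finite X1" using X1n finite_subset by blast
      have sp1: "1 \<le> real (card X1) * p"
      proof -
        have "(7 * m - 1) * p \<le> real s * p" using s1 p by (intro mult_right_mono) auto
        moreover have "(7 * m - 1) * p = 70 * ln d - p" using mp by (simp add: algebra_simps)
        ultimately show ?thesis using X1 lnd1 p by simp
      qed
      have "q \<le> 3 * (real (card X1) * p) ^ 2 * (1 - p) ^ (card X1 - 2)"
        unfolding q_def by (rule q_bound[OF finX1 p sp1])
      also have "\<dots> \<le> 3 * (70 * d) ^ 2 * (27 / d ^ 70)"
      proof (rule mult_mono)
        have "real (card X1) * p \<le> 7 * m * p" using X1 s2 p by (intro mult_right_mono) auto
        hence "real (card X1) * p \<le> 70 * d" using mp lndd by simp
        thus "3 * (real (card X1) * p) ^ 2 \<le> 3 * (70 * d) ^ 2" using p by (intro mult_left_mono power_mono) auto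
        have s2': "real (card X1 - 2) = real s - 2" using X1 s1 m10 by (simp add: of_nat_diff)
        have "(1 - p) ^ (card X1 - 2) \<le> exp (- (p * real (card X1 - 2)))" using p by (intro one_minus_pow_le_exp)
        also have "\<dots> \<le> exp (3 - real 70 * ln d)"
        proof -
          have "(7 * m - 3) * p \<le> (real s - 2) * p" using s1 p by (intro mult_right_mono) auto
          moreover have "(7 * m - 3) * p = 70 * ln d - 3 * p" using mp by (simp add: algebra_simps)
          ultimately have "70 * ln d - 3 \<le> p * real (card X1 - 2)" using s2' p by (simp add: mult.commute)
          thus ?thesis by simp
        qed
        also have "\<dots> = exp 3 * (1 / d ^ 70)" using dpos by (simp add: exp_diff inv_pow_exp[symmetric] exp_minus field_simps)
        also have "\<dots> \<le> 27 * (1 / d ^ 70)"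
        proof -
          have "exp 3 \<le> (3::real) ^ 3" using power_mono[OF exp_le, of 3] by (simp add: exp_of_nat_mult[symmetric])
          thus ?thesis using dpos by (intro mult_right_mono) auto
        qed
        finally show "(1 - p) ^ (card X1 - 2) \<le> 27 / d ^ 70" by simp
      qed (use dpos p in auto)
      also have "\<dots> \<le> 1 / d ^ 67"
      proof -
        have "396900 * d ^ 69 \<le> d ^ 70" using dge by (intro pow_gap) auto
        hence "396900 * d ^ 2 * d ^ 67 \<le> d ^ 70" by (simp add: mult.assoc power_add[of d 2 67, symmetric])
        thus ?thesis using dpos by (simp add: field_simps power2_eq_square)
      qed
      finally have q1: "q \<le> 1 / d ^ 67" .
      have "gnp_prob n p (FB n X1 b) \<le> real (n choose b) * q ^ b"
        unfolding q_def by (rule FB_bound[OF p X1n])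
      also have "\<dots> \<le> 1 / real n ^ 4"
        by (rule FB_num[OF d_def p0 n1 dge lnn q0 q1 b_def])
      finally show ?thesis .
    qed
    show "gnp_prob n p (FQ2 n X1 M) \<le> real n * (1 / real n ^ 4)"
    proof -
      have "gnp_prob n p (FQ2 n X1 M) \<le> (\<Sum>u\<in>{4..M}. real (n choose u) * real (card X1 choose (u - 1))
            * real ((u - 1) choose 3) ^ u * p ^ (3 * u) * (1 - p) ^ (u * (card X1 - (u - 1))))"
        by (rule FQ2_bound[OF p X1n])
      also have "\<dots> \<le> (\<Sum>u\<in>{4..M}. 1 / real n ^ 4)"
      proof (intro sum_mono)
        fix u assume u: "u \<in> {4..M}"
        have um: "real u \<le> m" using u M1 by simp
        show "real (n choose u) * real (card X1 choose (u - 1)) * real ((u - 1) choose 3) ^ u * p ^ (3 * u)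
              * (1 - p) ^ (u * (card X1 - (u - 1))) \<le> 1 / real n ^ 4"
          using FQ2_term[OF p0 p(2) d_def n1 dge lnd1 lndd lnn m_def _ um, of "card X1"] u s1 s2 X1 by simp
      qed
      also have "\<dots> \<le> real n * (1 / real n ^ 4)" using Mn by (auto intro!: divide_right_mono)
      finally show ?thesis .
    qed
    show "gnp_prob n p (FQ3 n W' M) \<le> real n * (1 / real n ^ 4)"
    proof -
      have cbig: "c \<le> card W' - (u - 1) - u" if u: "u \<in> {1..M}" for u
      proof -
        have "real u \<le> m" using u M1 by simp
        hence "real c + 2 * real u \<le> real (card W') + 1" unfolding c_def using cW' mn by linarith
        hence "real (c + 2 * u) \<le> real (card W' + 1)" by simp
        hence "c + 2 * u \<le> card W' + 1" by (simp only: of_nat_le_iff)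
        thus ?thesis using u by auto
      qed
      have "gnp_prob n p (FQ3 n W' M) \<le> (\<Sum>u\<in>{1..M}. real (n choose u) * real (card W' choose (u - 1)) * (1 - p) ^ (u * c))"
        by (rule FQ3_bound[OF p W'n cbig])
      also have "\<dots> \<le> (\<Sum>u\<in>{1..M}. 1 / real n ^ 4)"
      proof (intro sum_mono)
        fix u assume u: "u \<in> {1..M}"
        have "real n / 8 \<le> real c" unfolding c_def by linarith
        thus "real (n choose u) * real (card W' choose (u - 1)) * (1 - p) ^ (u * c) \<le> 1 / real n ^ 4"
          using FQ3_term[OF p0 p(2) d_def n1 lnn48 _ cW'n] u by simp
      qed
      also have "\<dots> \<le> real n * (1 / real n ^ 4)" using Mn by (auto intro!: divide_right_mono)
      finally show ?thesis .
    qed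
  qed
  also have "\<dots> \<le> 4 / real n ^ 3"
  proof -
    have "1 / real n ^ 4 \<le> real n * (1 / real n ^ 4)" using n1 by (simp add: field_simps)
    moreover have "real n * (1 / real n ^ 4) = 1 / real n ^ 3" using n1 by (simp add: field_simps eval_nat_numeral)
    ultimately show ?thesis by simp
  qed
  finally show ?thesis .
qed

theorem proposition3p42:
  fixes p :: "nat \<Rightarrow> real" and W :: "nat \<Rightarrow> nat set"
  assumes p_prob: "\<And>n. 0 \<le> p n \<and> p n \<le> 1"
    and p_large: "eventually (\<lambda>n. real n * p n \<ge> 10^4 * ln (real n)) sequentially"
    and W_sub: "eventually (\<lambda>n. W n \<subseteq> {1..n} \<and> real (card (W n)) \<ge> 3 * real n / 8) sequentially"
  shows "(\<lambda>n. 1 - gnp_prob n (p n)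
            (\<lambda>E. let m = 10 * ln (real n * p n) / p n in
               \<exists>X. X \<subseteq> W n \<and> real (card X) \<le> 8 * m \<and>
                 (\<forall>U. U \<subseteq> {1..n} - X \<and> real (card U) \<le> m \<longrightarrow>
                      card (nbr_in E U X) \<ge> card U)))
         \<in> o(\<lambda>n. real n powr (-2))"
proof -
  define f where "f = (\<lambda>n. 1 - gnp_prob n (p n)
            (\<lambda>E. let m = 10 * ln (real n * p n) / p n in
               \<exists>X. X \<subseteq> W n \<and> real (card X) \<le> 8 * m \<and>
                 (\<forall>U. U \<subseteq> {1..n} - X \<and> real (card U) \<le> m \<longrightarrow>
                      card (nbr_in E U X) \<ge> card U)))"
  have ln_ev: "eventually (\<lambda>n. 10^4 \<le> ln (real n)) sequentially"
  proof -
    have "eventually (\<lambda>n. nat \<lceil>exp (10^4::real)\<rceil> \<le> n) sequentially" by (rule eventually_ge_at_top)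
    moreover have "10^4 \<le> ln (real n)" if "nat \<lceil>exp (10^4::real)\<rceil> \<le> n" for n
    proof -
      have "exp (10^4::real) \<le> real n" using that by linarith
      moreover have "0 < exp (10^4::real)" by simp
      ultimately have pos: "0 < real n" by linarith
      have "ln (exp (10^4::real)) \<le> ln (real n)" using pos \<open>exp (10^4::real) \<le> real n\<close>
        by (subst ln_le_cancel_iff) auto
      thus ?thesis by simp
    qed
    ultimately show ?thesis by (auto elim: eventually_mono)
  qed
  have ev: "eventually (\<lambda>n. norm (f n) \<le> 4 * norm (real n powr (-3))) sequentially"
    using p_large W_sub ln_ev
  proof eventually_elim
    case (elim n)
    have n1: "1 \<le> real n"
    proof -
      have "(0::real) < 10^4" by simp
      hence "0 < ln (real n)" using elim(3) by linarith
      thus ?thesis using ln_le_zero_iff[of "real n"] by (cases "n = 0") auto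
    qed
    have pp: "0 \<le> p n" "p n \<le> 1" using p_prob by auto
    have up: "f n \<le> 4 / real n ^ 3"
      unfolding f_def by (rule main_n[OF pp elim(1) elim(3) conjunct1[OF elim(2)] conjunct2[OF elim(2)]])
    have lo: "0 \<le> f n" unfolding f_def gp_compl using pp by (rule gp_nonneg)
    have "real n powr (-3) = 1 / real n ^ 3" using n1 by (simp add: powr_minus powr_realpow divide_inverse)
    thus ?case using up lo by simp
  qed
  have "f \<in> O(\<lambda>n. real n powr (-3))" by (rule bigoI[OF ev])
  moreover have "(\<lambda>n. real n powr (-3)) \<in> o(\<lambda>n. real n powr (-2))" by real_asymp
  ultimately have "f \<in> o(\<lambda>n. real n powr (-2))" by (rule landau_o.big_small_trans)
  thus ?thesis unfolding f_def .
qed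

end
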